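(* Consider the stochastic multi-armed bandit data-collection model described in the context, in which each arm $P_k$, $k\in[k^*]$, has a finite mean $\mu_k$. Let $\tau_1\le\tau_2\le\cdots$ be a non-decreasing sequence of random times, and for each $t$ let $\kappa_t\in[k^*]$ be an arm index chosen by a (possibly randomized) choice function based on the data collected up to time $\tau_t$. Then: (i) if $N_{\kappa_t}(\tau_t)\to\infty$ almost surely as $t\to\infty$, then $\hat\mu_{\kappa_t}(\tau_t)-\mu_{\kappa_t}\to 0$ almost surely as $t\to\infty$; (ii) if $N_{\kappa_t}(\tau_t)\to\infty$ in probability as $t\to\infty$, then $\hat\mu_{\kappa_t}(\tau_t)-\mu_{\kappa_t}\to 0$ in probability as $t\to\infty$.
   Context: Fix an integer $k^*\ge1$ and probability distributions (arms) $P_1,\dots,P_{k^*}$ on $\mathbb{R}$ with finite means $\mu_k=\mathbb{E}_{Y\sim P_k}[Y]$. Data are collected as follows: $W$ is a random variable independent of everything else; at each time $t=1,2,\dots$, given the past data $\mathcal{D}_{t-1}=\{W,A_1,Y_1,\dots,A_{t-1},Y_{t-1}\}$, an arm index $A_t\in[k^*]=\{1,\dots,k^*\}$ is drawn from conditional probabilities $\nu_t(k\mid\mathcal{D}_{t-1})$ (an arbitrary, possibly data-dependent, sampling algorithm), and then $Y_t$ is an independent draw from $P_{A_t}$. For $k\in[k^*]$ and $t\ge1$ let $S_k(t)=\sum_{s=1}^t\mathbf{1}(A_s=k)Y_s$, $N_k(t)=\sum_{s=1}^t\mathbf{1}(A_s=k)$, and (whenever $N_k(t)\ge1$) $\hat\mu_k(t)=S_k(t)/N_k(t)$.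 The random times $\tau_t$ are arbitrary random times (not necessarily stopping times). *)

theory Defs
  imports "HOL-Probability.Probability"
begin

definition pulls :: "(nat \<Rightarrow> 'a \<Rightarrow> nat) \<Rightarrow> nat \<Rightarrow> nat \<Rightarrow> 'a \<Rightarrow> nat" where
  "pulls A k t x = card {s \<in> {1..t}. A s x = k}"

definition rsum :: "(nat \<Rightarrow> 'a \<Rightarrow> nat) \<Rightarrow> (nat \<Rightarrow> 'a \<Rightarrow> real) \<Rightarrow> nat \<Rightarrow> nat \<Rightarrow> 'a \<Rightarrow> real" where
  "rsum A Y k t x = (\<Sum>s\<in>{1..t}. (if A s x = k then Y s x else 0))"

text \<open>Empirical mean; when N = 0 this is 0 (Isabelle convention x/0 = 0), irrelevant here.\<close>
definition muhat :: "(nat \<Rightarrow> 'a \<Rightarrow> nat) \<Rightarrow> (nat \<Rightarrow> 'a \<Rightarrow> real) \<Rightarrow> nat \<Rightarrow> nat \<Rightarrow> 'a \<Rightarrow> real" where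
  "muhat A Y k t x = rsum A Y k t x / real (pulls A k t x)"

definition hist_sigma :: "'a measure \<Rightarrow> ('a \<Rightarrow> 'w) \<Rightarrow> 'w measure \<Rightarrow> (nat \<Rightarrow> 'a \<Rightarrow> nat)
    \<Rightarrow> (nat \<Rightarrow> 'a \<Rightarrow> real) \<Rightarrow> nat \<Rightarrow> nat \<Rightarrow> 'a measure" where
  "hist_sigma M W MW A Y ta ty = sigma (space M)
     ({W -` B \<inter> space M | B. B \<in> sets MW}
      \<union> {A s -` B \<inter> space M | s B. 1 \<le> s \<and> s \<le> ta}
      \<union> {Y s -` B \<inter> space M | s B. 1 \<le> s \<and> s \<le> ty \<and> B \<in> sets borel})"

text \<open>The bandit data-collection model: A_t in [k*], and conditionally on
  D_{t-1} = (W, A_1, Y_1, ..., A_{t-1}, Y_{t-1}) and A_t, Y_t has law P_{A_t}.\<close>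
definition bandit_model :: "'a measure \<Rightarrow> nat \<Rightarrow> (nat \<Rightarrow> real measure) \<Rightarrow> ('a \<Rightarrow> 'w) \<Rightarrow> 'w measure
    \<Rightarrow> (nat \<Rightarrow> 'a \<Rightarrow> nat) \<Rightarrow> (nat \<Rightarrow> 'a \<Rightarrow> real) \<Rightarrow> bool" where
  "bandit_model M kstar P W MW A Y \<longleftrightarrow>
     prob_space M \<and> 1 \<le> kstar \<and>
     (\<forall>k\<in>{1..kstar}. prob_space (P k) \<and> sets (P k) = sets borel \<and> integrable (P k) (\<lambda>y. y)) \<and>
     W \<in> M \<rightarrow>\<^sub>M MW \<and>
     (\<forall>t\<ge>1. A t \<in> M \<rightarrow>\<^sub>M count_space UNIV \<and> (\<forall>x\<in>space M. A t x \<in> {1..kstar})) \<and>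
     (\<forall>t\<ge>1. Y t \<in> borel_measurable M) \<and>
     (\<forall>t\<ge>1. \<forall>B\<in>sets borel.
        AE x in M. real_cond_exp M (hist_sigma M W MW A Y t (t - 1)) (indicator (Y t -` B \<inter> space M)) x
                   = measure (P (A t x)) B)"

end

theory Submission
  imports Defs
begin


locale bandit =
  fixes M :: "'a measure" and kstar :: nat and P :: "nat \<Rightarrow> real measure"
    and W :: "'a \<Rightarrow> 'w" and MW :: "'w measure"
    and A :: "nat \<Rightarrow> 'a \<Rightarrow> nat" and Y :: "nat \<Rightarrow> 'a \<Rightarrow> real"
  assumes model: "bandit_model M kstar P W MW A Y"
begin

lemma prob: "prob_space M" using model unfolding bandit_model_def by blast

sublocale prob_space M by (rule prob)

lemma P_prob: "k \<in> {1..kstar} \<Longrightarrow> prob_space (P k)"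
  and P_sets: "k \<in> {1..kstar} \<Longrightarrow> sets (P k) = sets borel"
  and P_int: "k \<in> {1..kstar} \<Longrightarrow> integrable (P k) (\<lambda>y. y)"
  using model unfolding bandit_model_def by blast+

lemma W_meas: "W \<in> M \<rightarrow>\<^sub>M MW" using model unfolding bandit_model_def by blast

lemma A_meas: "1 \<le> t \<Longrightarrow> A t \<in> M \<rightarrow>\<^sub>M count_space UNIV"
  and A_range: "1 \<le> t \<Longrightarrow> x \<in> space M \<Longrightarrow> A t x \<in> {1..kstar}"
  and Y_meas: "1 \<le> t \<Longrightarrow> Y t \<in> borel_measurable M"
  using model unfolding bandit_model_def by blast+

lemma cond: "1 \<le> t \<Longrightarrow> B \<in> sets borel \<Longrightarrow>
   AE x in M. real_cond_exp M (hist_sigma M W MW A Y t (t - 1)) (indicator (Y t -` B \<inter> space M)) x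
                   = measure (P (A t x)) B"
  using model unfolding bandit_model_def by blast

definition G :: "nat \<Rightarrow> 'a measure" where
  "G t = hist_sigma M W MW A Y t (t - 1)"

definition gen :: "nat \<Rightarrow> 'a set set" where
  "gen t = ({W -` B \<inter> space M | B. B \<in> sets MW}
      \<union> {A s -` B \<inter> space M | s B. 1 \<le> s \<and> s \<le> t}
      \<union> {Y s -` B \<inter> space M | s B. 1 \<le> s \<and> s \<le> t - 1 \<and> B \<in> sets borel})"

lemma gen_sub: "gen t \<subseteq> sets M"
proof -
  have "W -` B \<inter> space M \<in> sets M" if "B \<in> sets MW" for B
    using W_meas that by (rule measurable_sets)
  moreover have "A s -` B \<inter> space M \<in> sets M" if "1 \<le> s" for s B
    using A_meas[OF that] by (rule measurable_sets) auto
  moreover have "Y s -` B \<inter> space M \<in> sets M" if "1 \<le> s" "B \<in> sets borel" for s B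
    using Y_meas[OF that(1)] that(2) by (rule measurable_sets)
  ultimately show ?thesis unfolding gen_def by blast
qed

lemma gen_Pow: "gen t \<subseteq> Pow (space M)"
  using gen_sub sets.sets_into_space by blast

lemma G_eq: "G t = sigma (space M) (gen t)"
  unfolding G_def hist_sigma_def gen_def by simp

lemma space_G[simp]: "space (G t) = space M"
  unfolding G_eq using gen_Pow by (simp add: space_measure_of_conv)

lemma sets_G: "sets (G t) = sigma_sets (space M) (gen t)"
  unfolding G_eq using gen_Pow by (simp add: sets_measure_of_conv)

lemma gen_in_G: "X \<in> gen t \<Longrightarrow> X \<in> sets (G t)"
  unfolding sets_G by auto

lemma G_sub: "sets (G t) \<subseteq> sets M"
  unfolding sets_G using gen_sub by (meson sets.sigma_sets_subset)

lemma subalg_G: "subalgebra M (G t)"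
  unfolding subalgebra_def using G_sub by simp

lemma fms_G: "finite_measure_subalgebra M (G t)"
  unfolding finite_measure_subalgebra_def finite_measure_subalgebra_axioms_def
  using subalg_G finite_measure_axioms by blast

lemma sfs_G: "sigma_finite_subalgebra M (G t)"
proof -
  interpret finite_measure_subalgebra M "G t" by (rule fms_G)
  show ?thesis by (rule sigma_finite_subalgebra_axioms)
qed

lemma A_meas_G: assumes "1 \<le> s" "s \<le> t" shows "A s \<in> G t \<rightarrow>\<^sub>M count_space UNIV"
proof (rule measurableI)
  fix B :: "nat set"
  have "A s -` B \<inter> space M \<in> {A s -` B \<inter> space M | s B. 1 \<le> s \<and> s \<le> t}"
    using assms by auto
  then have "A s -` B \<inter> space M \<in> gen t" unfolding gen_def by (intro UnI1 UnI2)
  from gen_in_G[OF this] show "A s -` B \<inter> space (G t) \<in> sets (G t)" by (simp only: space_G)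
qed simp

lemma Y_meas_G: assumes "1 \<le> s" "s < t" shows "Y s \<in> borel_measurable (G t)"
proof (rule measurableI)
  fix B :: "real set" assume "B \<in> sets borel"
  then have "Y s -` B \<inter> space M \<in> {Y s -` B \<inter> space M | s B. 1 \<le> s \<and> s \<le> t - 1 \<and> B \<in> sets borel}"
    using assms \<open>B \<in> sets borel\<close> by (intro CollectI exI[of _ s] exI[of _ B]) auto
  then have "Y s -` B \<inter> space M \<in> gen t" unfolding gen_def by (rule UnI2)
  from gen_in_G[OF this] show "Y s -` B \<inter> space (G t) \<in> sets (G t)" by (simp only: space_G)
qed simp

end

context bandit begin

lemma Z_meas_M: "Z \<in> borel_measurable (G t) \<Longrightarrow> Z \<in> borel_measurable M"
  using measurable_from_subalg subalg_G by blast

lemma bounded_int: "f \<in> borel_measurable M \<Longrightarrow> (\<And>x. x \<in> space M \<Longrightarrow> \<bar>f x\<bar> \<le> (c::real)) \<Longrightarrow> integrable M f"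
  by (rule integrable_const_bound[where B=c]) auto

lemma KL_ind:
  assumes t: "1 \<le> t" and B: "B \<in> sets borel" and Z: "Z \<in> borel_measurable (G t)"
    and bnd: "\<And>x. x \<in> space M \<Longrightarrow> \<bar>Z x\<bar> \<le> c"
  shows "(\<integral>x. Z x * indicator (Y t -` B \<inter> space M) x \<partial>M) = (\<integral>x. Z x * measure (P (A t x)) B \<partial>M)"
proof -
  interpret S: sigma_finite_subalgebra M "G t" by (rule sfs_G)
  have Zm[measurable]: "Z \<in> borel_measurable M" using Z by (rule Z_meas_M)
  have Bm[measurable]: "Y t -` B \<inter> space M \<in> sets M" using Y_meas[OF t] B by (rule measurable_sets)
  have im[measurable]: "indicator (Y t -` B \<inter> space M) \<in> borel_measurable M" using Bm by simp
  have int1: "integrable M (\<lambda>x. Z x * indicator (Y t -` B \<inter> space M) x)"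
  proof (rule bounded_int[where c=c])
    show "(\<lambda>x. Z x * indicator (Y t -` B \<inter> space M) x) \<in> borel_measurable M" by measurable
    fix x assume x: "x \<in> space M"
    have "\<bar>Z x * indicator (Y t -` B \<inter> space M) x\<bar> \<le> \<bar>Z x\<bar>" by (simp add: indicator_def abs_mult)
    then show "\<bar>Z x * indicator (Y t -` B \<inter> space M) x\<bar> \<le> c" using bnd[OF x] by linarith
  qed
  have "(\<integral>x. Z x * indicator (Y t -` B \<inter> space M) x \<partial>M)
      = (\<integral>x. Z x * real_cond_exp M (G t) (indicator (Y t -` B \<inter> space M)) x \<partial>M)"
    using S.real_cond_exp_intg(2)[OF int1 Z im] by simp
  also have "\<dots> = (\<integral>x. Z x * measure (P (A t x)) B \<partial>M)"
  proof (rule integral_cong_AE)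
    show "(\<lambda>x. Z x * real_cond_exp M (G t) (indicator (Y t -` B \<inter> space M)) x) \<in> borel_measurable M"
      using Zm by measurable
    have "(\<lambda>x. measure (P (A t x)) B) \<in> borel_measurable M"
      using measurable_compose[OF A_meas[OF t], of "\<lambda>k. measure (P k) B" borel] by simp
    then show "(\<lambda>x. Z x * measure (P (A t x)) B) \<in> borel_measurable M"
      using Zm by measurable
    show "AE x in M. Z x * real_cond_exp M (G t) (indicator (Y t -` B \<inter> space M)) x = Z x * measure (P (A t x)) B"
      using cond[OF t B] unfolding G_def by eventually_elim simp
  qed
  finally show ?thesis .
qed

lemma KL_pos:
  assumes t: "1 \<le> t" and Z: "Z \<in> borel_measurable (G t)"
    and bnd: "\<And>x. x \<in> space M \<Longrightarrow> \<bar>Z x\<bar> \<le> (c::real)"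
    and pos: "\<And>x. x \<in> space M \<Longrightarrow> 0 \<le> Z x"
    and van: "\<And>x. x \<in> space M \<Longrightarrow> A t x \<noteq> k \<Longrightarrow> Z x = 0" and k: "k \<in> {1..kstar}"
    and g: "g \<in> borel_measurable borel" and gb: "\<And>y. \<bar>g y\<bar> \<le> (d::real)"
  shows "(\<integral>x. Z x * g (Y t x) \<partial>M) = (\<integral>x. Z x \<partial>M) * (\<integral>y. g y \<partial>P k)"
proof -
  interpret Pk: prob_space "P k" using P_prob[OF k] .
  have Zm[measurable]: "Z \<in> borel_measurable M" using Z by (rule Z_meas_M)
  have Ym[measurable]: "Y t \<in> borel_measurable M" using Y_meas[OF t] .
  have intZ: "integrable M Z" by (rule bounded_int[where c=c]) (use Zm bnd in auto)
  have Z0: "0 \<le> (\<integral>x. Z x \<partial>M)" using pos by (intro integral_nonneg_AE AE_I2) auto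
  define \<nu> where "\<nu> = distr (density M (\<lambda>x. ennreal (Z x))) borel (Y t)"
  have nu_eq: "\<nu> = density (P k) (\<lambda>_. ennreal (\<integral>x. Z x \<partial>M))"
  proof (rule measure_eqI)
    show "sets \<nu> = sets (density (P k) (\<lambda>_. ennreal (\<integral>x. Z x \<partial>M)))"
      using P_sets[OF k] by (simp add: \<nu>_def)
    fix B assume "B \<in> sets \<nu>"
    then have B: "B \<in> sets borel" by (simp add: \<nu>_def)
    have Bm[measurable]: "Y t -` B \<inter> space M \<in> sets M" using Ym B by (rule measurable_sets)
    have int1: "integrable M (\<lambda>x. Z x * indicator (Y t -` B \<inter> space M) x)"
    proof (rule bounded_int[where c=c])
      show "(\<lambda>x. Z x * indicator (Y t -` B \<inter> space M) x) \<in> borel_measurable M" by measurable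
      fix x assume x: "x \<in> space M"
      have "\<bar>Z x * indicator (Y t -` B \<inter> space M) x\<bar> \<le> \<bar>Z x\<bar>" by (simp add: indicator_def abs_mult)
      then show "\<bar>Z x * indicator (Y t -` B \<inter> space M) x\<bar> \<le> c" using bnd[OF x] by linarith
    qed
    have "emeasure \<nu> B = emeasure (density M (\<lambda>x. ennreal (Z x))) (Y t -` B \<inter> space M)"
      unfolding \<nu>_def by (subst emeasure_distr) (auto simp: B)
    also have "\<dots> = (\<integral>\<^sup>+x. ennreal (Z x) * indicator (Y t -` B \<inter> space M) x \<partial>M)"
      using Bm by (subst emeasure_density) auto
    also have "\<dots> = (\<integral>\<^sup>+x. ennreal (Z x * indicator (Y t -` B \<inter> space M) x) \<partial>M)"
      by (intro nn_integral_cong) (auto simp: indicator_def)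
    also have "\<dots> = ennreal (\<integral>x. Z x * indicator (Y t -` B \<inter> space M) x \<partial>M)"
      using int1 pos by (intro nn_integral_eq_integral) (auto simp: indicator_def)
    also have "(\<integral>x. Z x * indicator (Y t -` B \<inter> space M) x \<partial>M) = (\<integral>x. Z x * measure (P (A t x)) B \<partial>M)"
      by (rule KL_ind[OF t B Z bnd])
    also have "\<dots> = (\<integral>x. Z x * measure (P k) B \<partial>M)"
    proof (rule Bochner_Integration.integral_cong)
      fix x assume x: "x \<in> space M"
      show "Z x * measure (P (A t x)) B = Z x * measure (P k) B"
        by (cases "A t x = k") (auto simp: van[OF x])
    qed simp_all
    also have "\<dots> = (\<integral>x. Z x \<partial>M) * measure (P k) B" by simp
    also have "ennreal \<dots> = emeasure (density (P k) (\<lambda>_. ennreal (\<integral>x. Z x \<partial>M))) B"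
      using B P_sets[OF k] Z0
      by (subst emeasure_density_const) (auto simp: Pk.emeasure_eq_measure ennreal_mult)
    finally show "emeasure \<nu> B = emeasure (density (P k) (\<lambda>_. ennreal (\<integral>x. Z x \<partial>M))) B" .
  qed
  have gm[measurable]: "g \<in> borel_measurable borel" using g .
  have gP[measurable]: "g \<in> borel_measurable (P k)" using g P_sets[OF k] by (simp cong: measurable_cong_sets)
  have "(\<integral>x. Z x * g (Y t x) \<partial>M) = integral\<^sup>L (density M (\<lambda>x. ennreal (Z x))) (\<lambda>x. g (Y t x))"
    using pos by (subst integral_density) auto
  also have "\<dots> = integral\<^sup>L \<nu> g"
    unfolding \<nu>_def by (subst integral_distr) auto
  also have "\<dots> = (\<integral>y. (\<integral>x. Z x \<partial>M) * g y \<partial>P k)"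
    unfolding nu_eq using Z0 by (subst integral_density) auto
  also have "\<dots> = (\<integral>x. Z x \<partial>M) * (\<integral>y. g y \<partial>P k)" by simp
  finally show ?thesis .
qed

lemma KL:
  assumes t: "1 \<le> t" and Z: "Z \<in> borel_measurable (G t)"
    and bnd: "\<And>x. x \<in> space M \<Longrightarrow> \<bar>Z x\<bar> \<le> (c::real)"
    and van: "\<And>x. x \<in> space M \<Longrightarrow> A t x \<noteq> k \<Longrightarrow> Z x = 0" and k: "k \<in> {1..kstar}"
    and g: "g \<in> borel_measurable borel" and gb: "\<And>y. \<bar>g y\<bar> \<le> (d::real)"
  shows "(\<integral>x. Z x * g (Y t x) \<partial>M) = (\<integral>x. Z x \<partial>M) * (\<integral>y. g y \<partial>P k)"
proof -
  have Zm[measurable]: "Z \<in> borel_measurable M" using Z by (rule Z_meas_M)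
  have ZG[measurable]: "Z \<in> borel_measurable (G t)" using Z .
  have Ym[measurable]: "Y t \<in> borel_measurable M" using Y_meas[OF t] .
  define Z1 where "Z1 x = max (Z x) 0" for x
  define Z2 where "Z2 x = max (- Z x) 0" for x
  have Z1m: "Z1 \<in> borel_measurable (G t)" unfolding Z1_def using Z by (intro borel_measurable_max borel_measurable_const)
  have Z2m: "Z2 \<in> borel_measurable (G t)" unfolding Z2_def using Z by (intro borel_measurable_max borel_measurable_uminus borel_measurable_const)
  have Z1m'[measurable]: "Z1 \<in> borel_measurable M" "Z2 \<in> borel_measurable M"
    using Z1m Z2m by (auto intro: Z_meas_M)
  have bZ: "\<bar>Z1 x\<bar> \<le> c" "\<bar>Z2 x\<bar> \<le> c" "0 \<le> Z1 x" "0 \<le> Z2 x" if "x \<in> space M" for x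
    using bnd[OF that] unfolding Z1_def Z2_def by auto
  have bg: "\<bar>Z1 x * g (Y t x)\<bar> \<le> c * d" "\<bar>Z2 x * g (Y t x)\<bar> \<le> c * d" if x: "x \<in> space M" for x
  proof -
    have "\<bar>Z1 x\<bar> * \<bar>g (Y t x)\<bar> \<le> c * d" by (rule mult_mono) (use bZ[OF x] gb in auto)
    then show "\<bar>Z1 x * g (Y t x)\<bar> \<le> c * d" by (simp add: abs_mult)
    have "\<bar>Z2 x\<bar> * \<bar>g (Y t x)\<bar> \<le> c * d" by (rule mult_mono) (use bZ[OF x] gb in auto)
    then show "\<bar>Z2 x * g (Y t x)\<bar> \<le> c * d" by (simp add: abs_mult)
  qed
  have van1: "Z1 x = 0" "Z2 x = 0" if "x \<in> space M" "A t x \<noteq> k" for x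
    using van[OF that] unfolding Z1_def Z2_def by auto
  have e1: "(\<integral>x. Z1 x * g (Y t x) \<partial>M) = (\<integral>x. Z1 x \<partial>M) * (\<integral>y. g y \<partial>P k)"
    by (rule KL_pos[OF t Z1m _ _ _ k g gb, where c=c]) (use bZ van1 in auto)
  have e2: "(\<integral>x. Z2 x * g (Y t x) \<partial>M) = (\<integral>x. Z2 x \<partial>M) * (\<integral>y. g y \<partial>P k)"
    by (rule KL_pos[OF t Z2m _ _ _ k g gb, where c=c]) (use bZ van1 in auto)
  have i1: "integrable M Z1" "integrable M Z2"
    by (rule bounded_int[where c=c]; use bZ in auto)+
  have gm[measurable]: "g \<in> borel_measurable borel" using g .
  have i2: "integrable M (\<lambda>x. Z1 x * g (Y t x))" "integrable M (\<lambda>x. Z2 x * g (Y t x))"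
    by (rule bounded_int[where c="c*d"]; use bg in auto)+
  have ZZ: "Z x = Z1 x - Z2 x" for x unfolding Z1_def Z2_def by auto
  have "(\<integral>x. Z x * g (Y t x) \<partial>M) = (\<integral>x. Z1 x * g (Y t x) - Z2 x * g (Y t x) \<partial>M)"
    by (simp add: ZZ left_diff_distrib)
  also have "\<dots> = (\<integral>x. Z1 x * g (Y t x) \<partial>M) - (\<integral>x. Z2 x * g (Y t x) \<partial>M)"
    using i2 by simp
  also have "\<dots> = ((\<integral>x. Z1 x \<partial>M) - (\<integral>x. Z2 x \<partial>M)) * (\<integral>y. g y \<partial>P k)"
    by (simp add: e1 e2 left_diff_distrib)
  also have "(\<integral>x. Z1 x \<partial>M) - (\<integral>x. Z2 x \<partial>M) = (\<integral>x. Z x \<partial>M)"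
    using i1 by (simp add: ZZ)
  finally show ?thesis .
qed

end


locale arm = bandit +
  fixes k :: nat
  assumes k: "k \<in> {1..kstar}"
begin

definition N :: "nat \<Rightarrow> 'a \<Rightarrow> nat" where "N t x = pulls A k t x"

definition trunc :: "nat \<Rightarrow> real \<Rightarrow> real" where
  "trunc n y = (if \<bar>y\<bar> \<le> real n then y else 0)"

definition m :: "nat \<Rightarrow> real" where "m n = (\<integral>y. trunc n y \<partial>P k)"

definition h :: "nat \<Rightarrow> real \<Rightarrow> real" where "h n y = trunc n y - m n"

definition ind :: "nat \<Rightarrow> nat \<Rightarrow> 'a \<Rightarrow> real" where
  "ind s n x = (if A s x = k \<and> N (s - 1) x = n then 1 else 0)"

definition zeta :: "nat \<Rightarrow> nat \<Rightarrow> 'a \<Rightarrow> real" where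
  "zeta U s x = (\<Sum>n<U. ind s n x * h (Suc n) (Y s x))"

definition DU :: "nat \<Rightarrow> nat \<Rightarrow> 'a \<Rightarrow> real" where
  "DU U t x = (\<Sum>s\<in>{1..t}. zeta U s x)"

interpretation Pk: prob_space "P k" using P_prob[OF k] .

lemma N_0[simp]: "N 0 x = 0" by (simp add: N_def pulls_def)

lemma N_Suc: "N (Suc t) x = N t x + (if A (Suc t) x = k then 1 else 0)"
proof -
  have "{s \<in> {1..Suc t}. A s x = k} = {s \<in> {1..t}. A s x = k} \<union> (if A (Suc t) x = k then {Suc t} else {})"
    by (auto simp: le_Suc_eq)
  then show ?thesis unfolding N_def pulls_def by (auto simp: card_insert_if)
qed

lemma N_le: "N t x \<le> t"
  by (induction t) (auto simp: N_Suc)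

lemma N_mono: "t \<le> t' \<Longrightarrow> N t x \<le> N t' x"
  by (induction t' rule: dec_induct) (auto simp: N_Suc)

lemma N_sum: "N t x = (\<Sum>r\<in>{1..t}. if A r x = k then 1 else 0)"
  unfolding N_def pulls_def card_eq_sum by (rule sum.inter_filter) simp

lemma GI: "(\<Sum>s\<in>{1..t}. if A s x = k then f (N (s - 1) x) else 0) = (\<Sum>j<N t x. f j)"
proof (induction t)
  case 0 then show ?case by simp
next
  case (Suc t)
  have "{1..Suc t} = insert (Suc t) {1..t}" by auto
  then have "(\<Sum>s\<in>{1..Suc t}. if A s x = k then f (N (s - 1) x) else 0)
     = (if A (Suc t) x = k then f (N t x) else 0) + (\<Sum>s\<in>{1..t}. if A s x = k then f (N (s - 1) x) else 0)"
    by simp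
  also have "\<dots> = (\<Sum>j<N (Suc t) x. f j)" using Suc by (simp add: N_Suc add.commute)
  finally show ?case .
qed

lemma sum_ind: "(\<Sum>n<U. ind s n x * \<phi> n) = (if A s x = k \<and> N (s - 1) x < U then \<phi> (N (s - 1) x) else 0)"
proof -
  have "(\<Sum>n<U. ind s n x * \<phi> n) = (\<Sum>n<U. if A s x = k \<and> n = N (s - 1) x then \<phi> n else 0)"
    by (intro sum.cong) (auto simp: ind_def)
  also have "\<dots> = (if A s x = k \<and> N (s - 1) x < U then \<phi> (N (s - 1) x) else 0)"
    by (cases "A s x = k") (auto simp: sum.delta)
  finally show ?thesis .
qed

lemma zeta_alt: "zeta U s x = (if A s x = k \<and> N (s - 1) x < U then h (Suc (N (s - 1) x)) (Y s x) else 0)"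
  unfolding zeta_def by (rule sum_ind)

lemma trunc_bound: "\<bar>trunc n y\<bar> \<le> real n"
  by (simp add: trunc_def)

lemma trunc_meas[measurable]: "trunc n \<in> borel_measurable borel"
  unfolding trunc_def by measurable

lemma trunc_int: "integrable (P k) (trunc n)"
  by (rule Pk.integrable_const_bound[where B="real n"]) (use trunc_bound P_sets[OF k] in \<open>auto cong: measurable_cong_sets\<close>)

lemma m_bound: "\<bar>m n\<bar> \<le> real n"
proof -
  have "\<bar>m n\<bar> \<le> (\<integral>y. \<bar>trunc n y\<bar> \<partial>P k)" unfolding m_def by (rule integral_abs_bound)
  also have "\<dots> \<le> (\<integral>y. real n \<partial>P k)"
    by (rule integral_mono) (use trunc_int trunc_bound in auto)
  finally show ?thesis by (simp add: Pk.prob_space)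
qed

lemma h_bound: "\<bar>h n y\<bar> \<le> 2 * real n"
  using trunc_bound[of n y] m_bound[of n] unfolding h_def by linarith

lemma h_meas[measurable]: "h n \<in> borel_measurable borel"
  unfolding h_def by measurable

lemma h_int0: "(\<integral>y. h n y \<partial>P k) = 0"
  unfolding h_def using trunc_int by (simp add: m_def Pk.prob_space)

lemma zeta_bound: "\<bar>zeta U s x\<bar> \<le> 2 * real U"
proof -
  have "\<bar>h (Suc (N (s - 1) x)) (Y s x)\<bar> \<le> 2 * real U" if "N (s - 1) x < U"
    using h_bound[of "Suc (N (s - 1) x)" "Y s x"] that by simp
  then show ?thesis unfolding zeta_alt by auto
qed

lemma DU_bound: "\<bar>DU U t x\<bar> \<le> real t * (2 * real U)"
proof -
  have "\<bar>DU U t x\<bar> \<le> (\<Sum>s\<in>{1..t}. \<bar>zeta U s x\<bar>)" unfolding DU_def by (rule sum_abs)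
  also have "\<dots> \<le> (\<Sum>s\<in>{1..t}. 2 * real U)" by (intro sum_mono zeta_bound)
  finally show ?thesis by simp
qed

end

context arm begin

interpretation Pk: prob_space "P k" using P_prob[OF k] .

lemma fA_G: "1 \<le> r \<Longrightarrow> r \<le> s \<Longrightarrow> (\<lambda>x. (f::nat\<Rightarrow>real) (A r x)) \<in> borel_measurable (G s)"
  using measurable_compose[OF A_meas_G[of r s], of f borel] by simp

lemma N_G: "t < s \<Longrightarrow> (\<lambda>x. real (N t x)) \<in> borel_measurable (G s)"
proof -
  assume ts: "t < s"
  have "(\<lambda>x. (\<Sum>r\<in>{1..t}. (\<lambda>a. if a = k then 1 else 0::real) (A r x))) \<in> borel_measurable (G s)"
    using ts by (intro borel_measurable_sum fA_G) auto
  moreover have "real (N t x) = (\<Sum>r\<in>{1..t}. (\<lambda>a. if a = k then 1 else 0::real) (A r x))" for x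
    unfolding N_sum of_nat_sum by (intro sum.cong) auto
  ultimately show ?thesis by simp
qed

lemma ind_G: assumes "1 \<le> s" "s \<le> s'" shows "ind s n \<in> borel_measurable (G s')"
proof -
  have [measurable]: "(\<lambda>x. real (N (s - 1) x)) \<in> borel_measurable (G s')" using assms by (intro N_G) auto
  have [measurable]: "(\<lambda>x. (\<lambda>a. if a = k then 1 else 0::real) (A s x)) \<in> borel_measurable (G s')"
    using assms by (intro fA_G) auto
  have "(\<lambda>x. (\<lambda>a. if a = k then 1 else 0::real) (A s x) * (if real (N (s - 1) x) = real n then 1 else 0)) \<in> borel_measurable (G s')"
    by measurable
  moreover have eq: "ind s n = (\<lambda>x. (\<lambda>a. if a = k then 1 else 0::real) (A s x) * (if real (N (s - 1) x) = real n then 1 else 0))"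
    by (simp add: ind_def fun_eq_iff)
  ultimately show ?thesis by (simp only: eq)
qed

lemma zeta_G: assumes "1 \<le> s" "s < s'" shows "zeta U s \<in> borel_measurable (G s')"
proof -
  have [measurable]: "ind s n \<in> borel_measurable (G s')" for n using assms by (intro ind_G) auto
  have [measurable]: "Y s \<in> borel_measurable (G s')" using assms by (intro Y_meas_G) auto
  show ?thesis unfolding zeta_def by measurable
qed

lemma DU_G: assumes "t < s" shows "DU U t \<in> borel_measurable (G s)"
  unfolding DU_def using assms by (intro borel_measurable_sum zeta_G) auto

lemma ind_M[measurable]: "1 \<le> s \<Longrightarrow> ind s n \<in> borel_measurable M"
  using ind_G[of s s n] Z_meas_M by blast

lemma zeta_M[measurable]: "1 \<le> s \<Longrightarrow> zeta U s \<in> borel_measurable M"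
  using zeta_G[of s "Suc s" U] Z_meas_M by blast

lemma DU_M[measurable]: "DU U t \<in> borel_measurable M"
  using DU_G[of t "Suc t" U] Z_meas_M by blast

lemma ind_bound: "\<bar>ind s n x\<bar> \<le> 1" "0 \<le> ind s n x"
  by (auto simp: ind_def)

lemma orth:
  assumes s: "1 \<le> s" and Z: "Z \<in> borel_measurable (G s)" and bnd: "\<And>x. x \<in> space M \<Longrightarrow> \<bar>Z x\<bar> \<le> c"
  shows "(\<integral>x. Z x * zeta U s x \<partial>M) = 0"
proof -
  have Zm[measurable]: "Z \<in> borel_measurable M" using Z by (rule Z_meas_M)
  have Ym[measurable]: "Y s \<in> borel_measurable M" using Y_meas[OF s] .
  have ZiG: "(\<lambda>x. Z x * ind s n x) \<in> borel_measurable (G s)" for n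
    using Z ind_G[of s s n] s by (intro borel_measurable_times) auto
  have Zib: "\<bar>Z x * ind s n x\<bar> \<le> c" if "x \<in> space M" for x n
  proof -
    have "\<bar>Z x * ind s n x\<bar> \<le> \<bar>Z x\<bar>" using ind_bound[of s n x] by (simp add: abs_mult mult_left_le)
    then show ?thesis using bnd[OF that] by linarith
  qed
  have int: "integrable M (\<lambda>x. Z x * ind s n x * h (Suc n) (Y s x))" for n
  proof (rule bounded_int[where c="c * (2 * real (Suc n))"])
    show "(\<lambda>x. Z x * ind s n x * h (Suc n) (Y s x)) \<in> borel_measurable M" using s by measurable
    fix x assume x: "x \<in> space M"
    have "\<bar>Z x * ind s n x\<bar> * \<bar>h (Suc n) (Y s x)\<bar> \<le> c * (2 * real (Suc n))"
      by (rule mult_mono) (use Zib[OF x, of n] h_bound[of "Suc n" "Y s x"] abs_ge_zero order_trans in \<open>auto simp del: of_nat_Suc\<close>)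
    then show "\<bar>Z x * ind s n x * h (Suc n) (Y s x)\<bar> \<le> c * (2 * real (Suc n))" by (simp add: abs_mult)
  qed
  have "(\<integral>x. Z x * zeta U s x \<partial>M) = (\<integral>x. (\<Sum>n<U. Z x * ind s n x * h (Suc n) (Y s x)) \<partial>M)"
    unfolding zeta_def by (simp add: sum_distrib_left mult.assoc)
  also have "\<dots> = (\<Sum>n<U. \<integral>x. Z x * ind s n x * h (Suc n) (Y s x) \<partial>M)"
    using int by (rule Bochner_Integration.integral_sum) 
  also have "\<dots> = (\<Sum>n<U. (\<integral>x. Z x * ind s n x \<partial>M) * (\<integral>y. h (Suc n) y \<partial>P k))"
  proof (rule sum.cong[OF refl])
    fix n
    show "(\<integral>x. Z x * ind s n x * h (Suc n) (Y s x) \<partial>M) = (\<integral>x. Z x * ind s n x \<partial>M) * (\<integral>y. h (Suc n) y \<partial>P k)"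
      by (rule KL[OF s ZiG Zib _ k h_meas h_bound]) (auto simp: ind_def)
  qed
  also have "\<dots> = 0" by (simp add: h_int0)
  finally show ?thesis .
qed

lemma sq:
  assumes s: "1 \<le> s"
  shows "(\<integral>x. (zeta U s x)\<^sup>2 \<partial>M) = (\<Sum>n<U. (\<integral>x. ind s n x \<partial>M) * (\<integral>y. (h (Suc n) y)\<^sup>2 \<partial>P k))"
proof -
  have Ym[measurable]: "Y s \<in> borel_measurable M" using Y_meas[OF s] .
  have eq: "(zeta U s x)\<^sup>2 = (\<Sum>n<U. ind s n x * (h (Suc n) (Y s x))\<^sup>2)" for x
    unfolding zeta_alt sum_ind by simp
  have int: "integrable M (\<lambda>x. ind s n x * (h (Suc n) (Y s x))\<^sup>2)" for n
  proof (rule bounded_int[where c="(2 * real (Suc n))\<^sup>2"])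
    show "(\<lambda>x. ind s n x * (h (Suc n) (Y s x))\<^sup>2) \<in> borel_measurable M" using s by measurable
    fix x assume x: "x \<in> space M"
    have "\<bar>h (Suc n) (Y s x)\<bar>\<^sup>2 \<le> (2 * real (Suc n))\<^sup>2"
      by (rule power_mono) (use h_bound[of "Suc n" "Y s x"] in \<open>auto simp del: of_nat_Suc\<close>)
    then have "\<bar>ind s n x\<bar> * \<bar>h (Suc n) (Y s x)\<bar>\<^sup>2 \<le> 1 * (2 * real (Suc n))\<^sup>2"
      by (intro mult_mono) (use ind_bound in auto)
    then show "\<bar>ind s n x * (h (Suc n) (Y s x))\<^sup>2\<bar> \<le> (2 * real (Suc n))\<^sup>2" by (simp add: abs_mult)
  qed
  have "(\<integral>x. (zeta U s x)\<^sup>2 \<partial>M) = (\<Sum>n<U. \<integral>x. ind s n x * (h (Suc n) (Y s x))\<^sup>2 \<partial>M)"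
    unfolding eq using int by (rule Bochner_Integration.integral_sum)
  also have "\<dots> = (\<Sum>n<U. (\<integral>x. ind s n x \<partial>M) * (\<integral>y. (h (Suc n) y)\<^sup>2 \<partial>P k))"
  proof (rule sum.cong[OF refl])
    fix n
    have hb: "\<bar>(h (Suc n) y)\<^sup>2\<bar> \<le> (2 * real (Suc n))\<^sup>2" for y
      using power_mono[OF h_bound[of "Suc n" y] abs_ge_zero, of 2] by simp
    show "(\<integral>x. ind s n x * (h (Suc n) (Y s x))\<^sup>2 \<partial>M) = (\<integral>x. ind s n x \<partial>M) * (\<integral>y. (h (Suc n) y)\<^sup>2 \<partial>P k)"
      by (rule KL[OF s ind_G[OF s order_refl] _ _ k _ hb, where c=1]) (auto simp: ind_def)
  qed
  finally show ?thesis .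
qed

lemma DU_Suc: "DU U (Suc T) x = DU U T x + zeta U (Suc T) x"
proof -
  have "{1..Suc T} = insert (Suc T) {1..T}" by auto
  then show ?thesis unfolding DU_def by simp
qed

lemma DU_sq_int: "integrable M (\<lambda>x. (DU U T x)\<^sup>2)"
proof (rule bounded_int[where c="(real T * (2 * real U))\<^sup>2"])
  show "(\<lambda>x. (DU U T x)\<^sup>2) \<in> borel_measurable M" by measurable
  fix x
  show "\<bar>(DU U T x)\<^sup>2\<bar> \<le> (real T * (2 * real U))\<^sup>2"
    using power_mono[OF DU_bound[of U T x] abs_ge_zero, of 2] by simp
qed

lemma zeta_sq_int: "1 \<le> s \<Longrightarrow> integrable M (\<lambda>x. (zeta U s x)\<^sup>2)"
proof (rule bounded_int[where c="(2 * real U)\<^sup>2"])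
  assume "1 \<le> s"
  then show "(\<lambda>x. (zeta U s x)\<^sup>2) \<in> borel_measurable M" by measurable
  fix x
  show "\<bar>(zeta U s x)\<^sup>2\<bar> \<le> (2 * real U)\<^sup>2"
    using power_mono[OF zeta_bound[of U s x] abs_ge_zero, of 2] by simp
qed

lemma var: "(\<integral>x. (DU U T x)\<^sup>2 \<partial>M) = (\<Sum>s\<in>{1..T}. \<integral>x. (zeta U s x)\<^sup>2 \<partial>M)"
proof (induction T)
  case 0 then show ?case by (simp add: DU_def)
next
  case (Suc T)
  have i3: "integrable M (\<lambda>x. DU U T x * zeta U (Suc T) x)"
  proof (rule bounded_int[where c="(real T * (2 * real U)) * (2 * real U)"])
    show "(\<lambda>x. DU U T x * zeta U (Suc T) x) \<in> borel_measurable M" by measurable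
    fix x
    have "\<bar>DU U T x\<bar> * \<bar>zeta U (Suc T) x\<bar> \<le> (real T * (2 * real U)) * (2 * real U)"
      by (rule mult_mono) (use DU_bound zeta_bound in auto)
    then show "\<bar>DU U T x * zeta U (Suc T) x\<bar> \<le> (real T * (2 * real U)) * (2 * real U)" by (simp add: abs_mult)
  qed
  have o: "(\<integral>x. DU U T x * zeta U (Suc T) x \<partial>M) = 0"
    by (rule orth[OF _ DU_G DU_bound]) auto
  have "(\<integral>x. (DU U (Suc T) x)\<^sup>2 \<partial>M)
      = (\<integral>x. (DU U T x)\<^sup>2 + 2 * (DU U T x * zeta U (Suc T) x) + (zeta U (Suc T) x)\<^sup>2 \<partial>M)"
    by (simp add: DU_Suc power2_sum mult.assoc add_ac)
  also have "\<dots> = (\<integral>x. (DU U T x)\<^sup>2 \<partial>M) + 2 * (\<integral>x. DU U T x * zeta U (Suc T) x \<partial>M) + (\<integral>x. (zeta U (Suc T) x)\<^sup>2 \<partial>M)"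
    using DU_sq_int i3 zeta_sq_int[of "Suc T" U] by simp
  also have "\<dots> = (\<Sum>s\<in>{1..Suc T}. \<integral>x. (zeta U s x)\<^sup>2 \<partial>M)"
    using Suc o by (simp add: add.commute)
  finally show ?case .
qed

lemma ind_sum_le: "(\<Sum>s\<in>{1..T}. ind s n x) \<le> 1"
proof -
  have "(\<Sum>s\<in>{1..T}. ind s n x) = (\<Sum>s\<in>{1..T}. if A s x = k then (\<lambda>j. if j = n then 1 else 0::real) (N (s - 1) x) else 0)"
    by (intro sum.cong) (auto simp: ind_def)
  also have "\<dots> = (\<Sum>j<N T x. if j = n then 1 else 0::real)" by (rule GI)
  also have "\<dots> \<le> 1" by (simp add: sum.delta)
  finally show ?thesis .
qed

lemma var_bound: "(\<integral>x. (DU U T x)\<^sup>2 \<partial>M) \<le> (\<Sum>n<U. \<integral>y. (h (Suc n) y)\<^sup>2 \<partial>P k)"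
proof -
  have c0: "0 \<le> (\<integral>y. (h (Suc n) y)\<^sup>2 \<partial>P k)" for n by simp
  have ii: "integrable M (ind s n)" if "1 \<le> s" for s n
    by (rule bounded_int[where c=1]) (use that ind_bound in auto)
  have "(\<integral>x. (DU U T x)\<^sup>2 \<partial>M) = (\<Sum>s\<in>{1..T}. \<Sum>n<U. (\<integral>x. ind s n x \<partial>M) * (\<integral>y. (h (Suc n) y)\<^sup>2 \<partial>P k))"
    unfolding var by (intro sum.cong refl sq) auto
  also have "\<dots> = (\<Sum>n<U. (\<Sum>s\<in>{1..T}. \<integral>x. ind s n x \<partial>M) * (\<integral>y. (h (Suc n) y)\<^sup>2 \<partial>P k))"
    by (subst sum.swap) (simp add: sum_distrib_right)
  also have "\<dots> \<le> (\<Sum>n<U. 1 * (\<integral>y. (h (Suc n) y)\<^sup>2 \<partial>P k))"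
  proof (rule sum_mono)
    fix n
    have "(\<Sum>s\<in>{1..T}. \<integral>x. ind s n x \<partial>M) = (\<integral>x. (\<Sum>s\<in>{1..T}. ind s n x) \<partial>M)"
      using ii by (subst Bochner_Integration.integral_sum) auto
    also have "\<dots> \<le> (\<integral>x. 1 \<partial>M)"
      by (rule integral_mono) (use ii ind_sum_le in \<open>auto intro!: integrable_sum\<close>)
    finally have "(\<Sum>s\<in>{1..T}. \<integral>x. ind s n x \<partial>M) \<le> 1" by (simp add: prob_space)
    then show "(\<Sum>s\<in>{1..T}. \<integral>x. ind s n x \<partial>M) * (\<integral>y. (h (Suc n) y)\<^sup>2 \<partial>P k) \<le> 1 * (\<integral>y. (h (Suc n) y)\<^sup>2 \<partial>P k)"
      by (rule mult_right_mono) (rule c0)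
  qed
  finally show ?thesis by simp
qed

end

context arm begin

definition I :: "nat \<Rightarrow> nat \<Rightarrow> real \<Rightarrow> 'a \<Rightarrow> real" where
  "I U t l x = (if l < \<bar>DU U t x\<bar> \<and> (\<forall>r\<in>{1..<t}. \<bar>DU U r x\<bar> \<le> l) then 1 else 0)"

lemma I_G: assumes "t < s" shows "I U t l \<in> borel_measurable (G s)"
proof -
  have "{x\<in>space (G s). \<forall>r\<in>{1..<t}. \<bar>DU U r x\<bar> \<le> l} \<in> sets (G s)"
  proof (rule sets.sets_Collect_finite_All)
    fix r assume "r \<in> {1..<t}"
    then have [measurable]: "DU U r \<in> borel_measurable (G s)" using assms by (intro DU_G) auto
    show "{x\<in>space (G s). \<bar>DU U r x\<bar> \<le> l} \<in> sets (G s)" by measurable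
  qed simp
  then have p1: "(\<lambda>x. \<forall>r\<in>{1..<t}. \<bar>DU U r x\<bar> \<le> l) \<in> measurable (G s) (count_space UNIV)"
    unfolding Measurable.pred_def .
  have [measurable]: "DU U t \<in> borel_measurable (G s)" using assms by (rule DU_G)
  have [measurable]: "(\<lambda>x. \<forall>r\<in>{1..<t}. \<bar>DU U r x\<bar> \<le> l) \<in> measurable (G s) (count_space UNIV)" using p1 .
  show ?thesis unfolding I_def by measurable
qed

lemma I_M[measurable]: "I U t l \<in> borel_measurable M"
  using I_G[of t "Suc t" U l] Z_meas_M by blast

lemma I_01: "0 \<le> I U t l x" "I U t l x \<le> 1" by (auto simp: I_def)

lemma DU_0[simp]: "DU U 0 x = 0" by (simp add: DU_def)

lemma I_sum:
  assumes l: "0 \<le> l"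
  shows "(\<Sum>t\<in>{1..T}. I U t l x) = (if \<exists>t\<in>{1..T}. l < \<bar>DU U t x\<bar> then 1 else 0)"
proof (cases "\<exists>t\<in>{1..T}. l < \<bar>DU U t x\<bar>")
  case False
  then have "I U t l x = 0" if "t \<in> {1..T}" for t using that by (auto simp: I_def)
  then show ?thesis using False by simp
next
  case True
  define t0 where "t0 = (LEAST t. l < \<bar>DU U t x\<bar>)"
  obtain t1 where t1: "t1 \<in> {1..T}" "l < \<bar>DU U t1 x\<bar>" using True by blast
  have t0l: "l < \<bar>DU U t0 x\<bar>" unfolding t0_def by (rule LeastI[of _ t1]) (rule t1(2))
  have t0le: "t0 \<le> t1" unfolding t0_def by (rule Least_le) (rule t1(2))
  have t0min: "\<not> l < \<bar>DU U r x\<bar>" if "r < t0" for r using not_less_Least[OF that[unfolded t0_def]] by simp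
  have t01: "1 \<le> t0" using t0l l by (cases t0) auto
  have "I U t l x = (if t = t0 then 1 else 0)" if t: "t \<in> {1..T}" for t
  proof (cases "t = t0")
    case True
    then show ?thesis using t0l t0min by (auto simp: I_def not_less)
  next
    case False
    show ?thesis
    proof (cases "t < t0")
      case True then show ?thesis using t0min False by (auto simp: I_def)
    next
      case False2: False
      then have "t0 \<in> {1..<t}" using t01 \<open>t \<noteq> t0\<close> by auto
      then show ?thesis using t0l False by (auto simp: I_def not_le)
    qed
  qed
  then have "(\<Sum>t\<in>{1..T}. I U t l x) = (\<Sum>t\<in>{1..T}. if t = t0 then 1 else 0)" by (intro sum.cong) auto
  also have "\<dots> = 1" using t01 t0le t1 by (simp add: sum.delta)
  finally show ?thesis using True by simp
qed

lemma DU_split: "t \<le> T \<Longrightarrow> DU U T x = DU U t x + (\<Sum>s\<in>{Suc t..T}. zeta U s x)"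
proof -
  assume tT: "t \<le> T"
  have "{1..T} = {1..t} \<union> {Suc t..T}" using tT by auto
  then show ?thesis unfolding DU_def by (simp add: sum.union_disjoint)
qed

lemma int_bounded_M: "f \<in> borel_measurable M \<Longrightarrow> (\<And>x. \<bar>f x\<bar> \<le> (c::real)) \<Longrightarrow> integrable M f"
  by (rule bounded_int) auto

lemma DU_bound': "t \<le> T \<Longrightarrow> \<bar>DU U t x\<bar> \<le> real T * (2 * real U)"
  using DU_bound[of U t x] by (smt (verit) mult_right_mono of_nat_0_le_iff of_nat_mono)

lemma step_ineq:
  assumes t: "t \<in> {1..T}" and l: "0 \<le> l"
  shows "l\<^sup>2 * (\<integral>x. I U t l x \<partial>M) \<le> (\<integral>x. I U t l x * (DU U T x)\<^sup>2 \<partial>M)"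
proof -
  define K where "K = real T * (2 * real U)"
  have tT: "t \<le> T" using t by auto
  have bK: "\<bar>DU U r x\<bar> \<le> K" if "r \<le> T" for r x unfolding K_def by (rule DU_bound'[OF that])
  have K0: "0 \<le> K" unfolding K_def by simp
  define R where "R x = (\<Sum>s\<in>{Suc t..T}. zeta U s x)" for x
  have Rm[measurable]: "R \<in> borel_measurable M" unfolding R_def by measurable
  have Req: "DU U T x = DU U t x + R x" for x unfolding R_def by (rule DU_split[OF tT])
  have bR: "\<bar>R x\<bar> \<le> 2 * K" for x using bK[of T x] bK[OF tT, of x] Req[of x] by linarith
  have Ib: "\<bar>I U t l x\<bar> \<le> 1" for x using I_01[of U t l x] by auto
  have zero: "(\<integral>x. I U t l x * DU U t x * R x \<partial>M) = 0"
  proof -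
    have ZG: "(\<lambda>x. I U t l x * DU U t x) \<in> borel_measurable (G s)" if "s \<in> {Suc t..T}" for s
      using that I_G[of t s U l] DU_G[of t s U] by (intro borel_measurable_times) auto
    have Zb: "\<bar>I U t l x * DU U t x\<bar> \<le> K" for x
    proof -
      have "\<bar>I U t l x\<bar> * \<bar>DU U t x\<bar> \<le> 1 * K" by (rule mult_mono[OF Ib bK[OF tT] zero_le_one abs_ge_zero])
      then show ?thesis by (simp add: abs_mult)
    qed
    have int: "integrable M (\<lambda>x. I U t l x * DU U t x * zeta U s x)" if "s \<in> {Suc t..T}" for s
    proof (rule int_bounded_M[where c="K * (2 * real U)"])
      have [measurable]: "zeta U s \<in> borel_measurable M" using that by (intro zeta_M) auto
      show "(\<lambda>x. I U t l x * DU U t x * zeta U s x) \<in> borel_measurable M" by measurable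
      fix x
      have "\<bar>I U t l x * DU U t x\<bar> * \<bar>zeta U s x\<bar> \<le> K * (2 * real U)"
        by (rule mult_mono) (use Zb zeta_bound K0 in auto)
      then show "\<bar>I U t l x * DU U t x * zeta U s x\<bar> \<le> K * (2 * real U)" by (simp add: abs_mult)
    qed
    have "(\<integral>x. I U t l x * DU U t x * R x \<partial>M) = (\<integral>x. (\<Sum>s\<in>{Suc t..T}. I U t l x * DU U t x * zeta U s x) \<partial>M)"
      unfolding R_def by (simp add: sum_distrib_left)
    also have "\<dots> = (\<Sum>s\<in>{Suc t..T}. \<integral>x. I U t l x * DU U t x * zeta U s x \<partial>M)"
      using int by (rule Bochner_Integration.integral_sum)
    also have "\<dots> = 0"
    proof (rule sum.neutral, rule ballI)
      fix s assume s: "s \<in> {Suc t..T}"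
      show "(\<integral>x. I U t l x * DU U t x * zeta U s x \<partial>M) = 0"
        by (rule orth[OF _ ZG[OF s], where c=K]) (use s Zb in auto)
    qed
    finally show ?thesis .
  qed
  have i1: "integrable M (\<lambda>x. I U t l x * (DU U T x)\<^sup>2)"
  proof (rule int_bounded_M[where c="K\<^sup>2"])
    show "(\<lambda>x. I U t l x * (DU U T x)\<^sup>2) \<in> borel_measurable M" by measurable
    fix x
    have "\<bar>DU U T x\<bar>\<^sup>2 \<le> K\<^sup>2" by (rule power_mono) (use bK in auto)
    then have "\<bar>I U t l x\<bar> * \<bar>DU U T x\<bar>\<^sup>2 \<le> 1 * K\<^sup>2" by (intro mult_mono) (use Ib in auto)
    then show "\<bar>I U t l x * (DU U T x)\<^sup>2\<bar> \<le> K\<^sup>2" by (simp add: abs_mult)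
  qed
  have i3: "integrable M (\<lambda>x. I U t l x * (DU U t x)\<^sup>2)"
  proof (rule int_bounded_M[where c="K\<^sup>2"])
    show "(\<lambda>x. I U t l x * (DU U t x)\<^sup>2) \<in> borel_measurable M" by measurable
    fix x
    have "\<bar>DU U t x\<bar>\<^sup>2 \<le> K\<^sup>2" by (rule power_mono) (use bK tT in auto)
    then have "\<bar>I U t l x\<bar> * \<bar>DU U t x\<bar>\<^sup>2 \<le> 1 * K\<^sup>2" by (intro mult_mono) (use Ib in auto)
    then show "\<bar>I U t l x * (DU U t x)\<^sup>2\<bar> \<le> K\<^sup>2" by (simp add: abs_mult)
  qed
  have i4: "integrable M (\<lambda>x. I U t l x * DU U t x * R x)"
  proof (rule int_bounded_M[where c="K * (2 * K)"])
    show "(\<lambda>x. I U t l x * DU U t x * R x) \<in> borel_measurable M" by measurable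
    fix x
    have "\<bar>I U t l x\<bar> * \<bar>DU U t x\<bar> \<le> 1 * K" by (rule mult_mono[OF Ib bK[OF tT] zero_le_one abs_ge_zero])
    then have "(\<bar>I U t l x\<bar> * \<bar>DU U t x\<bar>) * \<bar>R x\<bar> \<le> K * (2 * K)" by (intro mult_mono) (use bR K0 in auto)
    then show "\<bar>I U t l x * DU U t x * R x\<bar> \<le> K * (2 * K)" by (simp add: abs_mult)
  qed
  have i2: "integrable M (\<lambda>x. I U t l x * (DU U t x)\<^sup>2 + 2 * (I U t l x * DU U t x * R x))"
    by (rule Bochner_Integration.integrable_add[OF i3 Bochner_Integration.integrable_mult_right[OF i4]])
  have iI: "integrable M (I U t l)" by (rule int_bounded_M[where c=1]) (use Ib in auto)
  have "l\<^sup>2 * (\<integral>x. I U t l x \<partial>M) = (\<integral>x. l\<^sup>2 * I U t l x \<partial>M)" by simp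
  also have "\<dots> \<le> (\<integral>x. I U t l x * (DU U t x)\<^sup>2 \<partial>M)"
  proof (rule integral_mono)
    show "integrable M (\<lambda>x. l\<^sup>2 * I U t l x)" using iI by simp
    show "integrable M (\<lambda>x. I U t l x * (DU U t x)\<^sup>2)" by (rule i3)
    fix x
    show "l\<^sup>2 * I U t l x \<le> I U t l x * (DU U t x)\<^sup>2"
    proof (cases "I U t l x = 0")
      case False
      then have "l < \<bar>DU U t x\<bar>" "I U t l x = 1" by (auto simp: I_def split: if_splits)
      then show ?thesis using l power_mono[of l "\<bar>DU U t x\<bar>" 2] by simp
    qed simp
  qed
  also have "\<dots> = (\<integral>x. I U t l x * (DU U t x)\<^sup>2 + 2 * (I U t l x * DU U t x * R x) \<partial>M)"
    using i3 i4 zero by simp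
  also have "\<dots> \<le> (\<integral>x. I U t l x * (DU U T x)\<^sup>2 \<partial>M)"
  proof (rule integral_mono[OF i2 i1])
    fix x
    have "0 \<le> I U t l x * (R x)\<^sup>2" using I_01 by simp
    then show "I U t l x * (DU U t x)\<^sup>2 + 2 * (I U t l x * DU U t x * R x) \<le> I U t l x * (DU U T x)\<^sup>2"
      unfolding Req by (simp add: power2_sum algebra_simps)
  qed
  finally show ?thesis .
qed

lemma maxineq:
  assumes l: "0 < l"
  shows "measure M {x\<in>space M. \<exists>t\<in>{1..T}. l < \<bar>DU U t x\<bar>} \<le> (\<integral>x. (DU U T x)\<^sup>2 \<partial>M) / l\<^sup>2"
proof -
  define K where "K = real T * (2 * real U)"
  have bK: "\<bar>DU U r x\<bar> \<le> K" if "r \<le> T" for r x unfolding K_def by (rule DU_bound'[OF that])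
  have iI: "integrable M (I U t l)" for t by (rule int_bounded_M[where c=1]) (use I_01 in \<open>auto simp: abs_le_iff\<close>)
  have i1: "integrable M (\<lambda>x. I U t l x * (DU U T x)\<^sup>2)" for t
  proof (rule int_bounded_M[where c="K\<^sup>2"])
    show "(\<lambda>x. I U t l x * (DU U T x)\<^sup>2) \<in> borel_measurable M" by measurable
    fix x
    have "\<bar>DU U T x\<bar>\<^sup>2 \<le> K\<^sup>2" by (rule power_mono) (use bK in auto)
    then have "\<bar>I U t l x\<bar> * \<bar>DU U T x\<bar>\<^sup>2 \<le> 1 * K\<^sup>2" by (intro mult_mono) (use I_01 in \<open>auto simp: abs_le_iff\<close>)
    then show "\<bar>I U t l x * (DU U T x)\<^sup>2\<bar> \<le> K\<^sup>2" by (simp add: abs_mult)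
  qed
  have Sm: "{x\<in>space M. \<exists>t\<in>{1..T}. l < \<bar>DU U t x\<bar>} \<in> sets M" by measurable
  have "measure M {x\<in>space M. \<exists>t\<in>{1..T}. l < \<bar>DU U t x\<bar>}
      = (\<integral>x. indicator {x\<in>space M. \<exists>t\<in>{1..T}. l < \<bar>DU U t x\<bar>} x \<partial>M)"
    using Sm by simp
  also have "\<dots> = (\<integral>x. (\<Sum>t\<in>{1..T}. I U t l x) \<partial>M)"
  proof (rule Bochner_Integration.integral_cong[OF refl])
    fix x assume "x \<in> space M"
    then show "indicator {x\<in>space M. \<exists>t\<in>{1..T}. l < \<bar>DU U t x\<bar>} x = (\<Sum>t\<in>{1..T}. I U t l x)"
      by (subst I_sum) (use l in \<open>auto simp: indicator_def\<close>)
  qed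
  also have "\<dots> = (\<Sum>t\<in>{1..T}. \<integral>x. I U t l x \<partial>M)"
    using iI by (rule Bochner_Integration.integral_sum)
  also have "\<dots> \<le> (\<Sum>t\<in>{1..T}. (\<integral>x. I U t l x * (DU U T x)\<^sup>2 \<partial>M) / l\<^sup>2)"
  proof (rule sum_mono)
    fix t assume "t \<in> {1..T}"
    from step_ineq[OF this, of l U] l show "(\<integral>x. I U t l x \<partial>M) \<le> (\<integral>x. I U t l x * (DU U T x)\<^sup>2 \<partial>M) / l\<^sup>2"
      by (simp add: field_simps)
  qed
  also have "\<dots> = (\<integral>x. (\<Sum>t\<in>{1..T}. I U t l x) * (DU U T x)\<^sup>2 \<partial>M) / l\<^sup>2"
    using i1 by (simp add: sum_divide_distrib[symmetric] sum_distrib_right Bochner_Integration.integral_sum)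
  also have "\<dots> \<le> (\<integral>x. (DU U T x)\<^sup>2 \<partial>M) / l\<^sup>2"
  proof (rule divide_right_mono)
    show "(\<integral>x. (\<Sum>t\<in>{1..T}. I U t l x) * (DU U T x)\<^sup>2 \<partial>M) \<le> (\<integral>x. (DU U T x)\<^sup>2 \<partial>M)"
    proof (rule integral_mono)
      show "integrable M (\<lambda>x. (\<Sum>t\<in>{1..T}. I U t l x) * (DU U T x)\<^sup>2)"
        using i1 by (simp add: sum_distrib_right)
      show "integrable M (\<lambda>x. (DU U T x)\<^sup>2)" by (rule DU_sq_int)
      fix x
      have "(\<Sum>t\<in>{1..T}. I U t l x) \<le> 1" by (subst I_sum) (use l in auto)
      then show "(\<Sum>t\<in>{1..T}. I U t l x) * (DU U T x)\<^sup>2 \<le> (DU U T x)\<^sup>2"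
        by (simp add: mult_left_le_one_le sum_nonneg I_01)
    qed
  qed simp
  finally show ?thesis .
qed

end

context arm begin

interpretation Pk: prob_space "P k" using P_prob[OF k] .

definition D :: "nat \<Rightarrow> 'a \<Rightarrow> real" where
  "D t x = (\<Sum>s\<in>{1..t}. if A s x = k then h (N s x) (Y s x) else 0)"

lemma N_pred: "1 \<le> s \<Longrightarrow> N s x = N (s - 1) x + (if A s x = k then 1 else 0)"
  using N_Suc[of "s - 1" x] by simp

lemma DU_eq: assumes "N t x \<le> U" shows "DU U t x = D t x"
  unfolding DU_def D_def
proof (rule sum.cong[OF refl])
  fix s assume s: "s \<in> {1..t}"
  have "N s x \<le> N t x" using s by (intro N_mono) auto
  then show "zeta U s x = (if A s x = k then h (N s x) (Y s x) else 0)"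
    unfolding zeta_alt using N_pred[of s x] s assms by auto
qed

lemma D_eq_DU: "D t x = DU t t x"
  using DU_eq[of t x t] N_le[of t x] by simp

lemma D_M[measurable]: "D t \<in> borel_measurable M"
proof -
  have "D t = DU t t" by (simp add: fun_eq_iff D_eq_DU)
  then show ?thesis by simp
qed

definition VB :: "nat \<Rightarrow> real" where "VB U = (\<Sum>n<U. \<integral>y. (h (Suc n) y)\<^sup>2 \<partial>P k)"

lemma event_bound:
  assumes l: "0 < l"
  shows "measure M {x\<in>space M. \<exists>t. N t x \<le> U \<and> l < \<bar>D t x\<bar>} \<le> VB U / l\<^sup>2"
proof -
  define S where "S T = {x\<in>space M. \<exists>t\<in>{1..T}. l < \<bar>DU U t x\<bar>}" for T
  have Sm: "S T \<in> sets M" for T unfolding S_def by measurable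
  have inc: "incseq S" unfolding S_def incseq_def by fastforce
  have lim: "(\<lambda>T. measure M (S T)) \<longlonglongrightarrow> measure M (\<Union>T. S T)"
    by (rule Lim_measure_incseq) (use Sm inc in auto)
  have b: "measure M (S T) \<le> VB U / l\<^sup>2" for T
  proof -
    have "measure M (S T) \<le> (\<integral>x. (DU U T x)\<^sup>2 \<partial>M) / l\<^sup>2" unfolding S_def by (rule maxineq[OF l])
    also have "\<dots> \<le> VB U / l\<^sup>2" unfolding VB_def by (intro divide_right_mono var_bound) simp
    finally show ?thesis .
  qed
  have "measure M (\<Union>T. S T) \<le> VB U / l\<^sup>2" using lim b by (intro LIMSEQ_le_const2) auto
  moreover have "{x\<in>space M. \<exists>t. N t x \<le> U \<and> l < \<bar>D t x\<bar>} \<subseteq> (\<Union>T. S T)"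
  proof
    fix x assume "x \<in> {x\<in>space M. \<exists>t. N t x \<le> U \<and> l < \<bar>D t x\<bar>}"
    then obtain t where x: "x \<in> space M" "N t x \<le> U" "l < \<bar>D t x\<bar>" by auto
    have "t \<noteq> 0"
    proof
      assume "t = 0"
      then have "D t x = 0" by (simp add: D_def)
      with x(3) l show False by simp
    qed
    then have "t \<in> {1..t}" by auto
    moreover have "l < \<bar>DU U t x\<bar>" using x(3) DU_eq[OF x(2)] by simp
    ultimately have "\<exists>t'\<in>{1..t}. l < \<bar>DU U t' x\<bar>" by blast
    then have "x \<in> S t" unfolding S_def using x(1) by blast
    then show "x \<in> (\<Union>T. S T)" by blast
  qed
  then have "measure M {x\<in>space M. \<exists>t. N t x \<le> U \<and> l < \<bar>D t x\<bar>} \<le> measure M (\<Union>T. S T)"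
    using Sm by (intro finite_measure_mono) auto
  ultimately show ?thesis by linarith
qed

definition v :: "nat \<Rightarrow> real" where "v n = (\<integral>y. (trunc n y)\<^sup>2 \<partial>P k)"

lemma trunc_sq_int: "integrable (P k) (\<lambda>y. (trunc n y)\<^sup>2)"
proof (rule Pk.integrable_const_bound[where B="(real n)\<^sup>2"])
  show "AE y in P k. norm ((trunc n y)\<^sup>2) \<le> (real n)\<^sup>2"
  proof (rule AE_I2)
    fix y
    have "\<bar>trunc n y\<bar>\<^sup>2 \<le> (real n)\<^sup>2" by (rule power_mono[OF trunc_bound abs_ge_zero])
    then show "norm ((trunc n y)\<^sup>2) \<le> (real n)\<^sup>2" by simp
  qed
  show "(\<lambda>y. (trunc n y)\<^sup>2) \<in> borel_measurable (P k)"
    using P_sets[OF k] by (simp cong: measurable_cong_sets)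
qed

lemma c_le_v: "(\<integral>y. (h n y)\<^sup>2 \<partial>P k) \<le> v n"
proof -
  have "(\<integral>y. (h n y)\<^sup>2 \<partial>P k) = (\<integral>y. (trunc n y)\<^sup>2 - 2 * m n * trunc n y + (m n)\<^sup>2 \<partial>P k)"
    by (intro Bochner_Integration.integral_cong refl) (simp add: h_def power2_diff algebra_simps)
  also have "\<dots> = v n - 2 * m n * m n + (m n)\<^sup>2"
    using trunc_sq_int trunc_int by (simp add: v_def m_def Pk.prob_space)
  also have "\<dots> \<le> v n" by (simp add: power2_eq_square)
  finally show ?thesis .
qed

lemma v_mono: "n \<le> n' \<Longrightarrow> v n \<le> v n'"
  unfolding v_def by (rule integral_mono[OF trunc_sq_int trunc_sq_int]) (auto simp: trunc_def)

lemma VB_le: "VB U \<le> real U * v U"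
proof -
  have "VB U \<le> (\<Sum>n<U. v U)" unfolding VB_def
  proof (rule sum_mono)
    fix n assume "n \<in> {..<U}"
    then have "v (Suc n) \<le> v U" by (intro v_mono) auto
    then show "(\<integral>y. (h (Suc n) y)\<^sup>2 \<partial>P k) \<le> v U" using c_le_v[of "Suc n"] by linarith
  qed
  then show ?thesis by simp
qed

lemma geom: "(\<Sum>j<J. if j0 \<le> j then (1/2::real)^j else 0) = (if J \<le> j0 then 0 else 2 * (1/2)^j0 - 2 * (1/2)^J)"
proof (induction J)
  case 0 then show ?case by simp
next
  case (Suc J)
  show ?case
  proof (cases "Suc J \<le> j0")
    case True then show ?thesis using Suc by simp
  next
    case False
    show ?thesis
    proof (cases "J = j0")
      case True then show ?thesis using Suc by (simp add: power_Suc)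
    next
      case False2: False
      then have "\<not> J \<le> j0" using False by simp
      then show ?thesis using Suc False by (simp add: power_Suc)
    qed
  qed
qed

lemma geom_le: "(\<Sum>j<J. if j0 \<le> j then (1/2::real)^j else 0) \<le> 2 * (1/2)^j0"
  unfolding geom by auto

lemma PW: "(\<Sum>j<J. (1/2::real)^j * (trunc (2^(Suc j)) y)\<^sup>2) \<le> 4 * \<bar>y\<bar>"
proof -
  obtain n :: nat where n: "\<bar>y\<bar> < 2^n" using real_arch_pow[of 2 "\<bar>y\<bar>"] by auto
  have "(2::real)^n \<le> 2^(Suc n)" by simp
  then have ex: "\<bar>y\<bar> \<le> 2^(Suc n)" using n by linarith
  define j0 where "j0 = (LEAST j. \<bar>y\<bar> \<le> 2^(Suc j))"
  have j0: "\<bar>y\<bar> \<le> 2^(Suc j0)" unfolding j0_def by (rule LeastI[of _ n]) (rule ex)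
  have below: "\<not> \<bar>y\<bar> \<le> 2^(Suc j)" if "j < j0" for j
    using not_less_Least[OF that[unfolded j0_def]] .
  have tb: "(1/2::real)^j * (trunc (2^(Suc j)) y)\<^sup>2 \<le> (if j0 \<le> j then (1/2::real)^j else 0) * y\<^sup>2" for j
  proof (cases "j0 \<le> j")
    case True
    have "(trunc (2^(Suc j)) y)\<^sup>2 \<le> y\<^sup>2" by (simp add: trunc_def)
    then show ?thesis using True by simp
  next
    case False
    then have "\<not> \<bar>y\<bar> \<le> 2^(Suc j)" by (intro below) simp
    then have "trunc (2^(Suc j)) y = 0" unfolding trunc_def by simp
    then show ?thesis using False by simp
  qed
  have "(\<Sum>j<J. (1/2::real)^j * (trunc (2^(Suc j)) y)\<^sup>2) \<le> (\<Sum>j<J. (if j0 \<le> j then (1/2::real)^j else 0) * y\<^sup>2)"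
    by (rule sum_mono) (rule tb)
  also have "\<dots> = (\<Sum>j<J. if j0 \<le> j then (1/2::real)^j else 0) * y\<^sup>2" by (simp add: sum_distrib_right)
  also have "\<dots> \<le> (2 * (1/2)^j0) * y\<^sup>2" by (rule mult_right_mono[OF geom_le]) simp
  also have "\<dots> = 2 * (1/2)^j0 * \<bar>y\<bar> * \<bar>y\<bar>" by (simp add: power2_eq_square abs_mult_self_eq)
  also have "\<dots> \<le> 2 * (1/2)^j0 * \<bar>y\<bar> * 2^(Suc j0)" by (rule mult_left_mono[OF j0]) simp
  also have "\<dots> = 4 * \<bar>y\<bar> * ((1/2)^j0 * 2^j0)" by simp
  also have "(1/2::real)^j0 * 2^j0 = 1" by (simp add: power_mult_distrib[symmetric])
  finally show ?thesis by simp
qed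

lemma summable_v: "summable (\<lambda>j. v (2^(Suc j)) / 2^j)"
proof (rule summableI_nonneg_bounded)
  fix j show "0 \<le> v (2^(Suc j)) / 2^j" unfolding v_def by simp
next
  fix J
  have "(\<Sum>j<J. v (2^(Suc j)) / 2^j) = (\<Sum>j<J. \<integral>y. (1/2::real)^j * (trunc (2^(Suc j)) y)\<^sup>2 \<partial>P k)"
  proof (rule sum.cong[OF refl])
    fix j
    have "(1/2::real)^j = 1/2^j" by (simp add: power_one_over)
    then show "v (2^(Suc j)) / 2^j = (\<integral>y. (1/2::real)^j * (trunc (2^(Suc j)) y)\<^sup>2 \<partial>P k)"
      by (simp add: v_def)
  qed
  also have "\<dots> = (\<integral>y. (\<Sum>j<J. (1/2::real)^j * (trunc (2^(Suc j)) y)\<^sup>2) \<partial>P k)"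
    using trunc_sq_int by (subst Bochner_Integration.integral_sum) auto
  also have "\<dots> \<le> (\<integral>y. 4 * \<bar>y\<bar> \<partial>P k)"
    by (rule integral_mono) (use trunc_sq_int P_int[OF k] PW in auto)
  finally show "(\<Sum>j<J. v (2^(Suc j)) / 2^j) \<le> (\<integral>y. 4 * \<bar>y\<bar> \<partial>P k)" .
qed

lemma dyadic: assumes "2^J < (n::nat)" shows "\<exists>j\<ge>J. 2^j < n \<and> n \<le> 2^(Suc j)"
proof -
  have "n < 2^n" by (rule less_exp)
  moreover have "(2::nat)^n \<le> 2^(Suc n)" by (rule power_increasing) auto
  ultimately have ex: "n \<le> 2^(Suc n)" by linarith
  define j where "j = (LEAST j. n \<le> 2^(Suc j))"
  have j: "n \<le> 2^(Suc j)" unfolding j_def by (rule LeastI[of _ n]) (rule ex)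
  have below: "\<not> n \<le> 2^(Suc i)" if "i < j" for i using not_less_Least[OF that[unfolded j_def]] .
  have "J \<le> j"
  proof (rule ccontr)
    assume "\<not> J \<le> j"
    then have "2^(Suc j) \<le> (2::nat)^J" by (intro power_increasing) auto
    then show False using j assms by linarith
  qed
  moreover have "2^j < n"
  proof (cases j)
    case 0 then show ?thesis using assms \<open>J \<le> j\<close> by simp
  next
    case (Suc i) then show ?thesis using below[of i] by simp
  qed
  ultimately show ?thesis using j by blast
qed

lemma D_small:
  assumes e: "0 < e"
  shows "AE x in M. \<exists>B. \<forall>t. B < N t x \<longrightarrow> \<bar>D t x\<bar> \<le> e * real (N t x)"
proof -
  define F where "F j = {x\<in>space M. \<exists>t. N t x \<le> 2^(Suc j) \<and> e * 2^j < \<bar>D t x\<bar>}" for j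
  have [measurable]: "(\<lambda>x. real (N t x)) \<in> borel_measurable M" for t
    using N_G[of t "Suc t"] Z_meas_M by blast
  have Fm: "F j \<in> sets M" for j
  proof -
    have "F j = {x\<in>space M. \<exists>t. real (N t x) \<le> 2^(Suc j) \<and> e * 2^j < \<bar>D t x\<bar>}"
      unfolding F_def by (metis (no_types, opaque_lifting) of_nat_le_iff of_nat_numeral of_nat_power)
    also have "\<dots> \<in> sets M" by measurable
    finally show ?thesis .
  qed
  have Fb: "measure M (F j) \<le> (2 / e\<^sup>2) * (v (2^(Suc j)) / 2^j)" for j
  proof -
    have "measure M (F j) \<le> VB (2^(Suc j)) / (e * 2^j)\<^sup>2"
      unfolding F_def using event_bound[of "e * 2^j" "2^(Suc j)"] e by simp
    also have "\<dots> \<le> (real (2^(Suc j)) * v (2^(Suc j))) / (e * 2^j)\<^sup>2"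
      by (rule divide_right_mono[OF VB_le]) simp
    also have "\<dots> = (2 / e\<^sup>2) * (v (2^(Suc j)) / 2^j)"
      using e by (simp add: field_simps power2_eq_square)
    finally show ?thesis .
  qed
  have sF: "summable (\<lambda>j. measure M (F j))"
    by (rule summable_comparison_test'[OF summable_mult[OF summable_v, of "2 / e\<^sup>2"]]) (use Fb in auto)
  have "AE x in M. eventually (\<lambda>j. x \<in> space M - F j) sequentially"
    by (rule borel_cantelli_AE1) (use Fm sF in \<open>auto simp: emeasure_eq_measure\<close>)
  then show ?thesis
  proof (rule AE_mp, intro AE_I2 impI)
    fix x assume x: "x \<in> space M" and ev: "eventually (\<lambda>j. x \<in> space M - F j) sequentially"
    then obtain J where J: "\<And>j. J \<le> j \<Longrightarrow> x \<notin> F j" unfolding eventually_sequentially by auto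
    have "\<bar>D t x\<bar> \<le> e * real (N t x)" if tJ: "(2::nat)^J < N t x" for t
    proof -
      obtain j where j: "J \<le> j" "2^j < N t x" "N t x \<le> 2^(Suc j)" using dyadic[of J "N t x"] tJ by blast
      have "\<not> e * 2^j < \<bar>D t x\<bar>" using J[OF j(1)] x j(3) unfolding F_def by blast
      moreover have "e * 2^j \<le> e * real (N t x)"
        using j(2) e by (intro mult_left_mono) (simp_all add: less_imp_le of_nat_less_iff[symmetric])
      ultimately show ?thesis by linarith
    qed
    then show "\<exists>B::nat. \<forall>t. B < N t x \<longrightarrow> \<bar>D t x\<bar> \<le> e * real (N t x)" by blast
  qed
qed

end


lemma cesaro0:
  fixes a :: "nat \<Rightarrow> real"
  assumes a: "a \<longlonglongrightarrow> 0"
  shows "(\<lambda>n. (\<Sum>j<n. a j) / real n) \<longlonglongrightarrow> 0"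
proof (unfold lim_sequentially, intro allI impI)
  fix r :: real assume r: "0 < r"
  obtain N0 where N0: "\<And>j. N0 \<le> j \<Longrightarrow> \<bar>a j\<bar> < r / 2"
    using a r unfolding lim_sequentially by (metis dist_real_def diff_zero half_gt_zero)
  define C where "C = (\<Sum>j<N0. \<bar>a j\<bar>)"
  have C0: "0 \<le> C" unfolding C_def by (simp add: sum_nonneg)
  obtain N1 :: nat where N1: "2 * C / r < real N1" using reals_Archimedean2 by blast
  show "\<exists>no. \<forall>n\<ge>no. dist ((\<Sum>j<n. a j) / real n) 0 < r"
  proof (intro exI allI impI)
    fix n assume n: "max (Suc N0) N1 \<le> n"
    then have nN0: "N0 \<le> n" and npos: "0 < real n" and nN1: "N1 \<le> n" by auto
    have split: "{..<n} = {..<N0} \<union> {N0..<n}" using nN0 by auto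
    have "\<bar>\<Sum>j<n. a j\<bar> \<le> (\<Sum>j<n. \<bar>a j\<bar>)" by (rule sum_abs)
    also have "\<dots> = C + (\<Sum>j\<in>{N0..<n}. \<bar>a j\<bar>)" unfolding C_def split by (subst sum.union_disjoint) auto
    also have "\<dots> \<le> C + (\<Sum>j\<in>{N0..<n}. r / 2)"
      using N0 by (intro add_left_mono sum_mono) (auto intro: less_imp_le)
    also have "\<dots> \<le> C + real n * (r / 2)" using r nN0 by simp
    finally have b: "\<bar>\<Sum>j<n. a j\<bar> \<le> C + real n * (r / 2)" .
    have "2 * C < r * real N1" using N1 r by (simp add: pos_divide_less_eq mult.commute)
    moreover have "r * real N1 \<le> r * real n" using nN1 r by (intro mult_left_mono) auto
    ultimately have "2 * C < r * real n" by linarith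
    moreover have "real n * (r / 2) = (r * real n) / 2" by simp
    ultimately have "C + real n * (r / 2) < r * real n" by linarith
    with b have "\<bar>\<Sum>j<n. a j\<bar> < r * real n" by linarith
    then show "dist ((\<Sum>j<n. a j) / real n) 0 < r" using npos by (simp add: dist_real_def field_simps)
  qed
qed

lemma cesaro:
  fixes a :: "nat \<Rightarrow> real"
  assumes a: "a \<longlonglongrightarrow> L"
  shows "(\<lambda>n. (\<Sum>j<n. a j) / real n) \<longlonglongrightarrow> L"
proof -
  have "(\<lambda>n. a n - L) \<longlonglongrightarrow> L - L" by (intro tendsto_diff a tendsto_const)
  then have "(\<lambda>n. a n - L) \<longlonglongrightarrow> 0" by simp
  then have "(\<lambda>n. (\<Sum>j<n. a j - L) / real n) \<longlonglongrightarrow> 0" by (rule cesaro0)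
  then have "(\<lambda>n. (\<Sum>j<n. a j - L) / real n + L) \<longlonglongrightarrow> 0 + L" by (intro tendsto_add) auto
  moreover have "eventually (\<lambda>n. (\<Sum>j<n. a j - L) / real n + L = (\<Sum>j<n. a j) / real n) sequentially"
    using eventually_gt_at_top[of 0] by eventually_elim (simp add: sum_subtractf field_simps)
  ultimately show ?thesis by (simp add: tendsto_cong)
qed

lemma filterlim_nat_of_real:
  assumes "filterlim (\<lambda>t. real (f t :: nat)) at_top F"
  shows "filterlim f at_top F"
  unfolding filterlim_at_top
proof
  fix Z :: nat
  have "eventually (\<lambda>t. real Z \<le> real (f t)) F" using assms unfolding filterlim_at_top by blast
  then show "eventually (\<lambda>t. Z \<le> f t) F" by eventually_elim simp
qed

context arm begin

interpretation Pk: prob_space "P k" using P_prob[OF k] .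

definition \<mu>k :: real where "\<mu>k = (\<integral>y. y \<partial>P k)"

lemma m_lim: "m \<longlonglongrightarrow> \<mu>k"
proof -
  have "(\<lambda>i. \<integral>y. trunc i y \<partial>P k) \<longlonglongrightarrow> (\<integral>y. y \<partial>P k)"
  proof (rule integral_dominated_convergence[where w="\<lambda>y. \<bar>y\<bar>"])
    show "(\<lambda>y. y) \<in> borel_measurable (P k)" using P_sets[OF k] by (simp cong: measurable_cong_sets)
    show "trunc i \<in> borel_measurable (P k)" for i using P_sets[OF k] by (simp cong: measurable_cong_sets)
    show "integrable (P k) (\<lambda>y. \<bar>y\<bar>)" using P_int[OF k] by simp
    show "AE y in P k. (\<lambda>i. trunc i y) \<longlonglongrightarrow> y"
    proof (rule AE_I2)
      fix y :: real
      obtain n :: nat where "\<bar>y\<bar> \<le> real n" using real_arch_simple by blast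
      then have "eventually (\<lambda>i. trunc i y = y) sequentially"
        unfolding eventually_sequentially trunc_def by (intro exI[of _ n]) auto
      then show "(\<lambda>i. trunc i y) \<longlonglongrightarrow> y" by (rule tendsto_eventually)
    qed
    show "AE y in P k. norm (trunc i y) \<le> \<bar>y\<bar>" for i by (rule AE_I2) (simp add: trunc_def)
  qed
  then show ?thesis unfolding m_def \<mu>k_def by simp
qed

lemma msum_lim:
  assumes "filterlim (\<lambda>t. real (N t x)) at_top sequentially"
  shows "(\<lambda>t. (\<Sum>j<N t x. m (Suc j)) / real (N t x)) \<longlonglongrightarrow> \<mu>k"
proof -
  have "(\<lambda>n. m (Suc n)) \<longlonglongrightarrow> \<mu>k" using m_lim by (rule LIMSEQ_Suc)
  then have c: "(\<lambda>n. (\<Sum>j<n. m (Suc j)) / real n) \<longlonglongrightarrow> \<mu>k" by (rule cesaro)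
  have "filterlim (\<lambda>t. N t x) at_top sequentially" using assms by (rule filterlim_nat_of_real)
  from filterlim_compose[OF c this] show ?thesis by (simp add: o_def)
qed

lemma D_lim:
  "AE x in M. filterlim (\<lambda>t. real (N t x)) at_top sequentially \<longrightarrow> (\<lambda>t. D t x / real (N t x)) \<longlonglongrightarrow> 0"
proof -
  have "AE x in M. \<forall>i::nat. \<exists>B. \<forall>t. B < N t x \<longrightarrow> \<bar>D t x\<bar> \<le> (1 / real (Suc i)) * real (N t x)"
    unfolding AE_all_countable by (intro allI D_small) simp
  then show ?thesis
  proof (rule AE_mp, intro AE_I2 impI)
    fix x assume H: "\<forall>i::nat. \<exists>B. \<forall>t. B < N t x \<longrightarrow> \<bar>D t x\<bar> \<le> (1 / real (Suc i)) * real (N t x)"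
      and lim: "filterlim (\<lambda>t. real (N t x)) at_top sequentially"
    have limN: "filterlim (\<lambda>t. N t x) at_top sequentially" using lim by (rule filterlim_nat_of_real)
    show "(\<lambda>t. D t x / real (N t x)) \<longlonglongrightarrow> 0"
    proof (unfold lim_sequentially, intro allI impI)
      fix r :: real assume r: "0 < r"
      obtain i :: nat where i: "1 / real (Suc i) < r" using r by (metis reals_Archimedean2 nat_approx_posE) 
      obtain B where B: "\<And>t. B < N t x \<Longrightarrow> \<bar>D t x\<bar> \<le> (1 / real (Suc i)) * real (N t x)" using H by blast
      have "eventually (\<lambda>t. Suc B \<le> N t x) sequentially" using limN unfolding filterlim_at_top by blast
      then obtain t0 where t0: "\<And>t. t0 \<le> t \<Longrightarrow> Suc B \<le> N t x" unfolding eventually_sequentially by blast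
      show "\<exists>no. \<forall>n\<ge>no. dist (D n x / real (N n x)) 0 < r"
      proof (intro exI allI impI)
        fix t assume "t0 \<le> t"
        then have tB: "B < N t x" using t0 by force
        then have Npos: "0 < real (N t x)" by simp
        have "\<bar>D t x\<bar> / real (N t x) \<le> 1 / real (Suc i)"
          using B[OF tB] Npos by (simp add: divide_le_eq)
        then show "dist (D t x / real (N t x)) 0 < r" using i by (simp add: dist_real_def)
      qed
    qed
  qed
qed

end

context arm begin

interpretation Pk: prob_space "P k" using P_prob[OF k] .

definition qf :: "nat \<Rightarrow> real \<Rightarrow> real" where "qf n y = (if real n < \<bar>y\<bar> then 1 else 0)"
definition q :: "nat \<Rightarrow> real" where "q n = (\<integral>y. qf n y \<partial>P k)"
definition Tev :: "nat \<Rightarrow> 'a set" where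
  "Tev s = {x\<in>space M. A (Suc s) x = k \<and> real (N (Suc s) x) < \<bar>Y (Suc s) x\<bar>}"

lemma qf_meas[measurable]: "qf n \<in> borel_measurable borel" unfolding qf_def by measurable

lemma qf_bound: "\<bar>qf n y\<bar> \<le> 1" by (simp add: qf_def)

lemma qf_int: "integrable (P k) (qf n)"
  by (rule Pk.integrable_const_bound[where B=1]) (use qf_bound P_sets[OF k] in \<open>auto cong: measurable_cong_sets\<close>)

lemma QW: "(\<Sum>j<J. qf (Suc j) y) \<le> \<bar>y\<bar>"
proof -
  have "(\<Sum>j<J. qf (Suc j) y) \<le> real J \<and> (\<Sum>j<J. qf (Suc j) y) \<le> \<bar>y\<bar>"
  proof (induction J)
    case 0 then show ?case by simp
  next
    case (Suc J)
    show ?case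
    proof (cases "real (Suc J) < \<bar>y\<bar>")
      case True then show ?thesis using Suc by (simp add: qf_def)
    next
      case False then show ?thesis using Suc by (simp add: qf_def)
    qed
  qed
  then show ?thesis by blast
qed

lemma q_sum: "(\<Sum>j<J. q (Suc j)) \<le> (\<integral>y. \<bar>y\<bar> \<partial>P k)"
proof -
  have "(\<Sum>j<J. q (Suc j)) = (\<integral>y. (\<Sum>j<J. qf (Suc j) y) \<partial>P k)"
    unfolding q_def using qf_int by (subst Bochner_Integration.integral_sum) auto
  also have "\<dots> \<le> (\<integral>y. \<bar>y\<bar> \<partial>P k)"
    by (rule integral_mono) (use qf_int P_int[OF k] QW in auto)
  finally show ?thesis .
qed

lemma q0: "0 \<le> q n" unfolding q_def qf_def by simp

lemma Tev_ind: "x \<in> space M \<Longrightarrow> indicator (Tev s) x = (\<Sum>n<Suc s. ind (Suc s) n x * qf (Suc n) (Y (Suc s) x))"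
  unfolding sum_ind using N_le[of s x] by (auto simp: Tev_def indicator_def qf_def N_Suc)

lemma Tev_sets: "Tev s \<in> sets M"
proof -
  have [measurable]: "Y (Suc s) \<in> borel_measurable M" by (rule Y_meas) simp
  have [measurable]: "(\<lambda>x. real (N (Suc s) x)) \<in> borel_measurable M"
    using N_G[of "Suc s" "Suc (Suc s)"] Z_meas_M by blast
  have [measurable]: "A (Suc s) \<in> M \<rightarrow>\<^sub>M count_space UNIV" by (rule A_meas) simp
  show ?thesis unfolding Tev_def by measurable
qed

lemma Tev_measure: "measure M (Tev s) = (\<Sum>n<Suc s. (\<integral>x. ind (Suc s) n x \<partial>M) * q (Suc n))"
proof -
  have [measurable]: "Y (Suc s) \<in> borel_measurable M" by (rule Y_meas) simp
  have int: "integrable M (\<lambda>x. ind (Suc s) n x * qf (Suc n) (Y (Suc s) x))" for n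
  proof (rule bounded_int[where c=1])
    show "(\<lambda>x. ind (Suc s) n x * qf (Suc n) (Y (Suc s) x)) \<in> borel_measurable M" by measurable
    fix x show "\<bar>ind (Suc s) n x * qf (Suc n) (Y (Suc s) x)\<bar> \<le> 1" by (simp add: ind_def qf_def)
  qed
  have "measure M (Tev s) = (\<integral>x. indicator (Tev s) x \<partial>M)" using Tev_sets by simp
  also have "\<dots> = (\<integral>x. (\<Sum>n<Suc s. ind (Suc s) n x * qf (Suc n) (Y (Suc s) x)) \<partial>M)"
    by (rule Bochner_Integration.integral_cong[OF refl]) (rule Tev_ind)
  also have "\<dots> = (\<Sum>n<Suc s. \<integral>x. ind (Suc s) n x * qf (Suc n) (Y (Suc s) x) \<partial>M)"
    using int by (rule Bochner_Integration.integral_sum)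
  also have "\<dots> = (\<Sum>n<Suc s. (\<integral>x. ind (Suc s) n x \<partial>M) * q (Suc n))"
  proof (rule sum.cong[OF refl])
    fix n
    show "(\<integral>x. ind (Suc s) n x * qf (Suc n) (Y (Suc s) x) \<partial>M) = (\<integral>x. ind (Suc s) n x \<partial>M) * q (Suc n)"
      unfolding q_def
      by (rule KL[OF _ ind_G[OF _ order_refl] _ _ k qf_meas qf_bound, where c=1]) (auto simp: ind_def)
  qed
  finally show ?thesis .
qed

lemma Tev_sum: "(\<Sum>s<S. measure M (Tev s)) \<le> (\<integral>y. \<bar>y\<bar> \<partial>P k)"
proof -
  have ii: "integrable M (ind s n)" if "1 \<le> s" for s n
    by (rule bounded_int[where c=1]) (use that ind_bound in auto)
  have pw: "(\<Sum>s<S. \<Sum>n<Suc s. ind (Suc s) n x * q (Suc n)) = (\<Sum>j<N S x. q (Suc j))" for x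
  proof -
    have "(\<Sum>s<S. \<Sum>n<Suc s. ind (Suc s) n x * q (Suc n)) = (\<Sum>s<S. if A (Suc s) x = k then q (Suc (N s x)) else 0)"
      unfolding sum_ind using N_le by (intro sum.cong refl) (auto simp: less_Suc_eq_le)
    also have "\<dots> = (\<Sum>s\<in>{Suc 0..S}. if A s x = k then q (Suc (N (s - 1) x)) else 0)"
      by (subst sum.atLeast1_atMost_eq) (simp only: diff_Suc_1)
    also have "\<dots> = (\<Sum>j<N S x. q (Suc j))" using GI[where t=S and x=x and f="\<lambda>j. q (Suc j)"] by simp
    finally show ?thesis .
  qed
  have "(\<Sum>s<S. measure M (Tev s)) = (\<Sum>s<S. \<Sum>n<Suc s. (\<integral>x. ind (Suc s) n x * q (Suc n) \<partial>M))"
    unfolding Tev_measure by simp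
  also have "\<dots> = (\<integral>x. (\<Sum>s<S. \<Sum>n<Suc s. ind (Suc s) n x * q (Suc n)) \<partial>M)"
    using ii by (simp add: Bochner_Integration.integral_sum)
  also have "\<dots> = (\<integral>x. (\<Sum>j<N S x. q (Suc j)) \<partial>M)" by (simp only: pw)
  also have "\<dots> \<le> (\<integral>x. (\<integral>y. \<bar>y\<bar> \<partial>P k) \<partial>M)"
  proof (rule integral_mono)
    show "integrable M (\<lambda>x. \<integral>y. \<bar>y\<bar> \<partial>P k)" by simp
    have "integrable M (\<lambda>x. (\<Sum>s<S. \<Sum>n<Suc s. ind (Suc s) n x * q (Suc n)))"
      using ii by (intro Bochner_Integration.integrable_sum integrable_mult_left) auto
    then show "integrable M (\<lambda>x. (\<Sum>j<N S x. q (Suc j)))" by (simp only: pw)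
    fix x show "(\<Sum>j<N S x. q (Suc j)) \<le> (\<integral>y. \<bar>y\<bar> \<partial>P k)" by (rule q_sum)
  qed
  also have "\<dots> = (\<integral>y. \<bar>y\<bar> \<partial>P k)" by (simp add: prob_space)
  finally show ?thesis .
qed

definition R :: "nat \<Rightarrow> 'a \<Rightarrow> real" where
  "R t x = (\<Sum>s\<in>{1..t}. if A s x = k then Y s x - trunc (N s x) (Y s x) else 0)"

lemma R_Suc: "R (Suc t) x = R t x + (if A (Suc t) x = k then Y (Suc t) x - trunc (N (Suc t) x) (Y (Suc t) x) else 0)"
proof -
  have "{1..Suc t} = insert (Suc t) {1..t}" by auto
  then show ?thesis unfolding R_def by simp
qed

lemma R_lim:
  "AE x in M. filterlim (\<lambda>t. real (N t x)) at_top sequentially \<longrightarrow> (\<lambda>t. R t x / real (N t x)) \<longlonglongrightarrow> 0"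
proof -
  have sT: "summable (\<lambda>s. measure M (Tev s))"
    by (rule summableI_nonneg_bounded[OF _ Tev_sum]) simp
  have "AE x in M. eventually (\<lambda>s. x \<in> space M - Tev s) sequentially"
    by (rule borel_cantelli_AE1) (use Tev_sets sT in \<open>auto simp: emeasure_eq_measure\<close>)
  then show ?thesis
  proof (rule AE_mp, intro AE_I2 impI)
    fix x assume x: "x \<in> space M" and ev: "eventually (\<lambda>s. x \<in> space M - Tev s) sequentially"
      and lim: "filterlim (\<lambda>t. real (N t x)) at_top sequentially"
    obtain s0 where s0: "\<And>s. s0 \<le> s \<Longrightarrow> x \<notin> Tev s" using ev unfolding eventually_sequentially by auto
    have const: "R t x = R (Suc s0) x" if "Suc s0 \<le> t" for t
      using that
    proof (induction t rule: dec_induct)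
      case base then show ?case by simp
    next
      case (step t)
      have "x \<notin> Tev t" using step(1) by (intro s0) simp
      then have "(if A (Suc t) x = k then Y (Suc t) x - trunc (N (Suc t) x) (Y (Suc t) x) else 0) = 0"
        using x by (auto simp: Tev_def trunc_def)
      then show ?case using step(3) by (simp add: R_Suc)
    qed
    have "(\<lambda>t. R t x) \<longlonglongrightarrow> R (Suc s0) x"
      by (rule tendsto_eventually) (unfold eventually_sequentially, use const in blast)
    then show "(\<lambda>t. R t x / real (N t x)) \<longlonglongrightarrow> 0"
      by (rule tendsto_divide_0) (rule filterlim_at_top_imp_at_infinity[OF lim])
  qed
qed

lemma decomp: "rsum A Y k t x = R t x + D t x + (\<Sum>j<N t x. m (Suc j))"
proof -
  have msum: "(\<Sum>s\<in>{1..t}. if A s x = k then m (N s x) else 0) = (\<Sum>j<N t x. m (Suc j))"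
  proof -
    have "(\<Sum>s\<in>{1..t}. if A s x = k then m (N s x) else 0) = (\<Sum>s\<in>{1..t}. if A s x = k then m (Suc (N (s - 1) x)) else 0)"
      by (intro sum.cong refl) (auto simp: N_pred)
    also have "\<dots> = (\<Sum>j<N t x. m (Suc j))" by (rule GI)
    finally show ?thesis .
  qed
  have "rsum A Y k t x = (\<Sum>s\<in>{1..t}. (if A s x = k then Y s x - trunc (N s x) (Y s x) else 0)
      + (if A s x = k then h (N s x) (Y s x) else 0) + (if A s x = k then m (N s x) else 0))"
    unfolding rsum_def by (intro sum.cong refl) (simp add: h_def)
  also have "\<dots> = R t x + D t x + (\<Sum>s\<in>{1..t}. if A s x = k then m (N s x) else 0)"
    unfolding R_def D_def by (simp add: sum.distrib)
  finally show ?thesis using msum by simp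
qed

lemma arm_slln:
  "AE x in M. filterlim (\<lambda>t. real (N t x)) at_top sequentially \<longrightarrow> (\<lambda>t. muhat A Y k t x) \<longlonglongrightarrow> \<mu>k"
  using R_lim D_lim
proof eventually_elim
  case (elim x)
  show ?case
  proof
    assume lim: "filterlim (\<lambda>t. real (N t x)) at_top sequentially"
    have "(\<lambda>t. R t x / real (N t x) + D t x / real (N t x) + (\<Sum>j<N t x. m (Suc j)) / real (N t x)) \<longlonglongrightarrow> 0 + 0 + \<mu>k"
      using elim lim msum_lim[OF lim] by (intro tendsto_add) auto
    moreover have "muhat A Y k t x = R t x / real (N t x) + D t x / real (N t x) + (\<Sum>j<N t x. m (Suc j)) / real (N t x)" for t
      unfolding muhat_def decomp N_def[symmetric] by (simp add: add_divide_distrib)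
    ultimately show "(\<lambda>t. muhat A Y k t x) \<longlonglongrightarrow> \<mu>k" by simp
  qed
qed

end


lemma pulls_mono: "t \<le> t' \<Longrightarrow> pulls A k t x \<le> pulls A k t' x"
  unfolding pulls_def by (rule card_mono) auto

context bandit begin

lemma slln_all:
  "AE x in M. \<forall>k\<in>{1..kstar}. filterlim (\<lambda>t. real (pulls A k t x)) at_top sequentially
      \<longrightarrow> (\<lambda>t. muhat A Y k t x) \<longlonglongrightarrow> (\<integral>y. y \<partial>P k)"
proof (rule AE_finite_allI)
  fix k assume k: "k \<in> {1..kstar}"
  interpret arm M kstar P W MW A Y k by unfold_locales (rule k)
  show "AE x in M. filterlim (\<lambda>t. real (pulls A k t x)) at_top sequentially
      \<longrightarrow> (\<lambda>t. muhat A Y k t x) \<longlonglongrightarrow> (\<integral>y. y \<partial>P k)"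
    using arm_slln unfolding N_def \<mu>k_def .
qed simp

lemma good:
  "AE x in M. \<forall>k\<in>{1..kstar}. \<forall>e>0. \<exists>m::nat. \<forall>t. real m \<le> real (pulls A k t x) \<longrightarrow> \<bar>muhat A Y k t x - (\<integral>y. y \<partial>P k)\<bar> \<le> e"
  using slln_all
proof eventually_elim
  case (elim x)
  show ?case
  proof (intro ballI allI impI)
    fix k :: nat and e :: real assume k: "k \<in> {1..kstar}" and e: "0 < e"
    show "\<exists>m::nat. \<forall>t. real m \<le> real (pulls A k t x) \<longrightarrow> \<bar>muhat A Y k t x - (\<integral>y. y \<partial>P k)\<bar> \<le> e"
    proof (cases "filterlim (\<lambda>t. real (pulls A k t x)) at_top sequentially")
      case True
      then have "(\<lambda>t. muhat A Y k t x) \<longlonglongrightarrow> (\<integral>y. y \<partial>P k)" using elim k by blast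
      then obtain T where T: "\<And>t. T \<le> t \<Longrightarrow> dist (muhat A Y k t x) (\<integral>y. y \<partial>P k) < e"
        using e unfolding lim_sequentially by blast
      show ?thesis
      proof (intro exI allI impI)
        fix t assume "real (Suc (pulls A k T x)) \<le> real (pulls A k t x)"
        then have "\<not> t \<le> T" using pulls_mono[of t T A k x] by auto
        then show "\<bar>muhat A Y k t x - (\<integral>y. y \<partial>P k)\<bar> \<le> e" using T[of t] by (simp add: dist_real_def)
      qed
    next
      case False
      then obtain Z where Z: "\<not> eventually (\<lambda>t. Z \<le> real (pulls A k t x)) sequentially"
        unfolding filterlim_at_top by blast
      have bnd: "real (pulls A k t x) < Z" for t
      proof (rule ccontr)
        assume "\<not> real (pulls A k t x) < Z"
        then have "\<forall>t'\<ge>t. Z \<le> real (pulls A k t' x)" using pulls_mono[of t _ A k x] by force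
        then show False using Z unfolding eventually_sequentially by blast
      qed
      obtain m :: nat where "Z \<le> real m" using real_arch_simple by blast
      then show ?thesis using bnd by (intro exI[of _ m]) (smt (verit))
    qed
  qed
qed

lemma pulls_meas[measurable]: "(\<lambda>x. real (pulls A i n x)) \<in> borel_measurable M"
proof -
  have "(\<lambda>x. (\<Sum>r\<in>{1..n}. (\<lambda>a. if a = i then 1 else 0::real) (A r x))) \<in> borel_measurable M"
    by (intro borel_measurable_sum measurable_compose[OF A_meas]) auto
  moreover have "real (pulls A i n x) = (\<Sum>r\<in>{1..n}. (\<lambda>a. if a = i then 1 else 0::real) (A r x))" for x
    unfolding pulls_def card_eq_sum of_nat_sum by (subst sum.inter_filter) (auto intro!: sum.cong)
  ultimately show ?thesis by simp
qed

lemma rsum_meas[measurable]: "rsum A Y i n \<in> borel_measurable M"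
proof -
  have "(\<lambda>x. (\<Sum>r\<in>{1..n}. (\<lambda>a. if a = i then 1 else 0::real) (A r x) * Y r x)) \<in> borel_measurable M"
    by (intro borel_measurable_sum borel_measurable_times measurable_compose[OF A_meas] Y_meas) auto
  moreover have eq: "rsum A Y i n = (\<lambda>x. (\<Sum>r\<in>{1..n}. (\<lambda>a. if a = i then 1 else 0::real) (A r x) * Y r x))"
    unfolding rsum_def by (auto intro!: sum.cong)
  ultimately show ?thesis by (simp only: eq)
qed

lemma muhat_meas[measurable]: "(\<lambda>x. muhat A Y i n x) \<in> borel_measurable M"
  unfolding muhat_def by measurable

end

theorem proposition1:
  fixes M :: "'a measure" and kstar :: nat and P :: "nat \<Rightarrow> real measure"
    and W :: "'a \<Rightarrow> 'w" and MW :: "'w measure"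
    and A :: "nat \<Rightarrow> 'a \<Rightarrow> nat" and Y :: "nat \<Rightarrow> 'a \<Rightarrow> real"
    and \<tau> :: "nat \<Rightarrow> 'a \<Rightarrow> nat" and \<kappa> :: "nat \<Rightarrow> 'a \<Rightarrow> nat"
  defines "\<mu> \<equiv> (\<lambda>k. integral\<^sup>L (P k) (\<lambda>y. y))"
  assumes model: "bandit_model M kstar P W MW A Y"
    and tau_meas: "\<And>t. \<tau> t \<in> M \<rightarrow>\<^sub>M count_space UNIV"
    and tau_mono: "\<And>t x. x \<in> space M \<Longrightarrow> \<tau> t x \<le> \<tau> (Suc t) x"
    and kappa_meas: "\<And>t. \<kappa> t \<in> M \<rightarrow>\<^sub>M count_space UNIV"
    and kappa_range: "\<And>t x. x \<in> space M \<Longrightarrow> \<kappa> t x \<in> {1..kstar}"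
  shows
    "((AE x in M. filterlim (\<lambda>t. real (pulls A (\<kappa> t x) (\<tau> t x) x)) at_top sequentially)
        \<longrightarrow> (AE x in M. (\<lambda>t. muhat A Y (\<kappa> t x) (\<tau> t x) x - \<mu> (\<kappa> t x)) \<longlonglongrightarrow> 0))
     \<and>
     ((\<forall>c::real. (\<lambda>t. measure M {x \<in> space M. real (pulls A (\<kappa> t x) (\<tau> t x) x) \<le> c}) \<longlonglongrightarrow> 0)
        \<longrightarrow> (\<forall>\<epsilon>>0. (\<lambda>t. measure M {x \<in> space M. \<bar>muhat A Y (\<kappa> t x) (\<tau> t x) x - \<mu> (\<kappa> t x)\<bar> > \<epsilon>}) \<longlonglongrightarrow> 0))"
proof -
  interpret bandit M kstar P W MW A Y by unfold_locales (rule model)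
  have goodx: "AE x in M. \<forall>k\<in>{1..kstar}. \<forall>e>0. \<exists>m::nat. \<forall>t. real m \<le> real (pulls A k t x) \<longrightarrow> \<bar>muhat A Y k t x - \<mu> k\<bar> \<le> e"
    using good unfolding \<mu>_def .
  have fin: "finite {1..kstar}" by simp
  have unif: "\<exists>m::nat. \<forall>k\<in>{1..kstar}. \<forall>t. real m \<le> real (pulls A k t x) \<longrightarrow> \<bar>muhat A Y k t x - \<mu> k\<bar> \<le> e"
    if gx: "\<forall>k\<in>{1..kstar}. \<forall>e>0. \<exists>m::nat. \<forall>t. real m \<le> real (pulls A k t x) \<longrightarrow> \<bar>muhat A Y k t x - \<mu> k\<bar> \<le> e"
      and e: "0 < e" for x e
  proof -
    have "\<forall>k\<in>{1..kstar}. \<exists>m::nat. \<forall>t. real m \<le> real (pulls A k t x) \<longrightarrow> \<bar>muhat A Y k t x - \<mu> k\<bar> \<le> e"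
      using gx e by blast
    then obtain mf where mf: "\<And>k. k \<in> {1..kstar} \<Longrightarrow> \<forall>t. real (mf k) \<le> real (pulls A k t x) \<longrightarrow> \<bar>muhat A Y k t x - \<mu> k\<bar> \<le> e"
      by metis
    define m0 where "m0 = Max (mf ` {1..kstar})"
    have "mf k \<le> m0" if "k \<in> {1..kstar}" for k unfolding m0_def using that fin by (intro Max_ge) auto
    then show ?thesis using mf by (intro exI[of _ m0]) (meson order_trans of_nat_le_iff)
  qed
  have Nm: "(\<lambda>x. real (pulls A (\<kappa> t x) (\<tau> t x) x)) \<in> borel_measurable M" for t
  proof (rule measurable_compose_countable'[where g="\<kappa> t" and I=UNIV and f="\<lambda>i x. real (pulls A i (\<tau> t x) x)"])
    fix i :: nat
    show "(\<lambda>x. real (pulls A i (\<tau> t x) x)) \<in> borel_measurable M"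
      by (rule measurable_compose_countable'[where g="\<tau> t" and I=UNIV and f="\<lambda>n x. real (pulls A i n x)"])
         (use tau_meas in auto)
  qed (use kappa_meas in auto)
  have Em: "(\<lambda>x. muhat A Y (\<kappa> t x) (\<tau> t x) x - \<mu> (\<kappa> t x)) \<in> borel_measurable M" for t
  proof (rule measurable_compose_countable'[where g="\<kappa> t" and I=UNIV and f="\<lambda>i x. muhat A Y i (\<tau> t x) x - \<mu> i"])
    fix i :: nat
    have "(\<lambda>x. muhat A Y i (\<tau> t x) x) \<in> borel_measurable M"
      by (rule measurable_compose_countable'[where g="\<tau> t" and I=UNIV and f="\<lambda>n x. muhat A Y i n x"])
         (use tau_meas in auto)
    then show "(\<lambda>x. muhat A Y i (\<tau> t x) x - \<mu> i) \<in> borel_measurable M" by simp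
  qed (use kappa_meas in auto)
  show ?thesis
  proof (intro conjI impI allI)
    assume H: "AE x in M. filterlim (\<lambda>t. real (pulls A (\<kappa> t x) (\<tau> t x) x)) at_top sequentially"
    show "AE x in M. (\<lambda>t. muhat A Y (\<kappa> t x) (\<tau> t x) x - \<mu> (\<kappa> t x)) \<longlonglongrightarrow> 0"
      using H goodx AE_space
    proof eventually_elim
      case (elim x)
      then have lim: "filterlim (\<lambda>t. real (pulls A (\<kappa> t x) (\<tau> t x) x)) at_top sequentially"
        and gx: "\<forall>k\<in>{1..kstar}. \<forall>e>0. \<exists>m::nat. \<forall>t. real m \<le> real (pulls A k t x) \<longrightarrow> \<bar>muhat A Y k t x - \<mu> k\<bar> \<le> e"
        and x: "x \<in> space M" by auto
      show ?case
      proof (unfold lim_sequentially, intro allI impI)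
        fix r :: real assume r: "0 < r"
        obtain m :: nat where m: "\<forall>k\<in>{1..kstar}. \<forall>t. real m \<le> real (pulls A k t x) \<longrightarrow> \<bar>muhat A Y k t x - \<mu> k\<bar> \<le> r / 2"
          using unif[OF gx, of "r / 2"] r by (metis half_gt_zero)
        have "eventually (\<lambda>t. real m \<le> real (pulls A (\<kappa> t x) (\<tau> t x) x)) sequentially"
          using lim unfolding filterlim_at_top by blast
        then obtain T where T: "\<And>t. T \<le> t \<Longrightarrow> real m \<le> real (pulls A (\<kappa> t x) (\<tau> t x) x)"
          unfolding eventually_sequentially by blast
        show "\<exists>no. \<forall>n\<ge>no. dist (muhat A Y (\<kappa> n x) (\<tau> n x) x - \<mu> (\<kappa> n x)) 0 < r"
        proof (intro exI allI impI)
          fix t assume "T \<le> t"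
          then have "\<bar>muhat A Y (\<kappa> t x) (\<tau> t x) x - \<mu> (\<kappa> t x)\<bar> \<le> r / 2"
            using m kappa_range[OF x, of t] T[OF \<open>T \<le> t\<close>] by blast
          then show "dist (muhat A Y (\<kappa> t x) (\<tau> t x) x - \<mu> (\<kappa> t x)) 0 < r" using r by (simp add: dist_real_def)
        qed
      qed
    qed
  next
    fix \<epsilon> :: real
    assume H2: "\<forall>c::real. (\<lambda>t. measure M {x \<in> space M. real (pulls A (\<kappa> t x) (\<tau> t x) x) \<le> c}) \<longlonglongrightarrow> 0"
      and eps: "0 < \<epsilon>"
    define Gm where "Gm m = {x\<in>space M. \<forall>k\<in>{1..kstar}. \<forall>t. real m \<le> real (pulls A k t x) \<longrightarrow> \<bar>muhat A Y k t x - \<mu> k\<bar> \<le> \<epsilon>}" for m :: nat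
    have Gm_sets: "Gm m \<in> sets M" for m unfolding Gm_def by measurable
    have inc: "incseq Gm" unfolding incseq_def Gm_def by force
    have "AE x in M. x \<in> (\<Union>m. Gm m)"
      using goodx AE_space
    proof eventually_elim
      case (elim x)
      then obtain m :: nat where "\<forall>k\<in>{1..kstar}. \<forall>t. real m \<le> real (pulls A k t x) \<longrightarrow> \<bar>muhat A Y k t x - \<mu> k\<bar> \<le> \<epsilon>"
        using unif[of x \<epsilon>] eps by blast
      then show ?case using elim unfolding Gm_def by blast
    qed
    then have p1: "prob (\<Union>m. Gm m) = 1" using Gm_sets by (subst AE_in_set_eq_1[symmetric]) auto
    have limG: "(\<lambda>m. prob (Gm m)) \<longlonglongrightarrow> 1"
      using Lim_measure_incseq[of Gm M] Gm_sets inc p1 by (auto simp: emeasure_eq_measure)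
    show "(\<lambda>t. measure M {x \<in> space M. \<bar>muhat A Y (\<kappa> t x) (\<tau> t x) x - \<mu> (\<kappa> t x)\<bar> > \<epsilon>}) \<longlonglongrightarrow> 0"
    proof (unfold lim_sequentially, intro allI impI)
      fix d :: real assume d: "0 < d"
      have d2: "0 < d / 2" using d by simp
      obtain m0 where m0: "\<forall>n\<ge>m0. dist (prob (Gm n)) 1 < d / 2"
        using limG d2 unfolding lim_sequentially by blast
      define m where "m = m0"
      have m: "dist (prob (Gm m)) 1 < d / 2" using m0 unfolding m_def by blast
      have "(\<lambda>t. measure M {x \<in> space M. real (pulls A (\<kappa> t x) (\<tau> t x) x) \<le> real m}) \<longlonglongrightarrow> 0" using H2 by blast
      then obtain T where T: "\<And>t. T \<le> t \<Longrightarrow> dist (measure M {x \<in> space M. real (pulls A (\<kappa> t x) (\<tau> t x) x) \<le> real m}) 0 < d / 2"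
        using d2 unfolding lim_sequentially by blast
      show "\<exists>no. \<forall>n\<ge>no. dist (measure M {x \<in> space M. \<bar>muhat A Y (\<kappa> n x) (\<tau> n x) x - \<mu> (\<kappa> n x)\<bar> > \<epsilon>}) 0 < d"
      proof (intro exI allI impI)
        fix t assume tT: "T \<le> t"
        define B1 where "B1 = {x \<in> space M. real (pulls A (\<kappa> t x) (\<tau> t x) x) \<le> real m}"
        have B1s: "B1 \<in> sets M" unfolding B1_def using Nm[of t] by measurable
        have sub: "{x \<in> space M. \<bar>muhat A Y (\<kappa> t x) (\<tau> t x) x - \<mu> (\<kappa> t x)\<bar> > \<epsilon>} \<subseteq> B1 \<union> (space M - Gm m)"
        proof
          fix x assume xs: "x \<in> {x \<in> space M. \<bar>muhat A Y (\<kappa> t x) (\<tau> t x) x - \<mu> (\<kappa> t x)\<bar> > \<epsilon>}"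
          then have x: "x \<in> space M" and big: "\<epsilon> < \<bar>muhat A Y (\<kappa> t x) (\<tau> t x) x - \<mu> (\<kappa> t x)\<bar>" by auto
          show "x \<in> B1 \<union> (space M - Gm m)"
          proof (cases "x \<in> Gm m")
            case True
            then have "\<not> real m \<le> real (pulls A (\<kappa> t x) (\<tau> t x) x)"
              using big kappa_range[OF x] unfolding Gm_def by force
            then show ?thesis using x unfolding B1_def by auto
          qed (use x in auto)
        qed
        have "measure M {x \<in> space M. \<bar>muhat A Y (\<kappa> t x) (\<tau> t x) x - \<mu> (\<kappa> t x)\<bar> > \<epsilon>} \<le> measure M (B1 \<union> (space M - Gm m))"
          using sub B1s Gm_sets by (intro finite_measure_mono) auto
        also have "\<dots> \<le> measure M B1 + measure M (space M - Gm m)"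
          using B1s Gm_sets by (intro measure_Un_le) auto
        also have "measure M (space M - Gm m) = 1 - prob (Gm m)" using Gm_sets by (rule prob_compl)
        finally have le: "measure M {x \<in> space M. \<bar>muhat A Y (\<kappa> t x) (\<tau> t x) x - \<mu> (\<kappa> t x)\<bar> > \<epsilon>} \<le> measure M B1 + (1 - prob (Gm m))" .
        have "measure M B1 < d / 2" using T[OF tT] unfolding B1_def by (simp add: dist_real_def)
        moreover have "1 - prob (Gm m) < d / 2" using m by (simp add: dist_real_def)
        ultimately show "dist (measure M {x \<in> space M. \<bar>muhat A Y (\<kappa> t x) (\<tau> t x) x - \<mu> (\<kappa> t x)\<bar> > \<epsilon>}) 0 < d"
          using le by (simp add: dist_real_def)
      qed
    qed
  qed
qed


end
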